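(* Let $A$ be a graded algebra and $G\le\mathrm{GrAut}\,A$ a subgroup. For every $r\ge1$, $A^{[r]}*G\cong(A*G)^{[r]}$ as graded algebras.
   Context: Graded algebras are $\mathbb{N}$-graded algebras over an algebraically closed field $k$. For a graded vector space $V$, $V^{(r)}=\bigoplus_{n\in\mathbb{Z}}V_{rn}$ with degree $n$ part $V_{rn}$, and $V(j)_m=V_{j+m}$. The $r$-th quasi-Veronese algebra $A^{[r]}$ is the $r\times r$ matrix algebra (indices $0,\dots,r-1$) whose $(i,j)$ entry is $A(j-i)^{(r)}$, with multiplication $(a_{ij})(b_{ij})=(\sum_{k=0}^{r-1}a_{kj}b_{ik})$. $G$ acts on $A^{[r]}$ entrywise: $g((a_{ij}))=(g(a_{ij}))$. The skew group algebra $B*G=B\otimes_kkG$ has multiplication $(a*g)(b*h)=ag(b)*gh$, graded by $B$. *)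

theory Defs
  imports "HOL-Algebra.Ring" "HOL-Library.FuncSet" "HOL-Computational_Algebra.Polynomial"
begin

text \<open>A k-algebra with an N-grading: a HOL-Algebra ring record extended by a
scalar multiplication by the field type 'k and the family of homogeneous
components grd n (n a natural number).\<close>

record ('k, 'a) gralg = "'a ring" +
  sm  :: "'k \<Rightarrow> 'a \<Rightarrow> 'a"
  grd :: "nat \<Rightarrow> 'a set"

definition alg_closed :: "'k::field itself \<Rightarrow> bool" where
  "alg_closed _ \<longleftrightarrow> (\<forall>p :: 'k poly. degree p \<noteq> 0 \<longrightarrow> (\<exists>x. poly p x = 0))"

definition k_algebra :: "('k::field, 'a) gralg \<Rightarrow> bool" where
  "k_algebra A \<longleftrightarrow> ring A
    \<and> (\<forall>c. \<forall>x\<in>carrier A. sm A c x \<in> carrier A)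
    \<and> (\<forall>x\<in>carrier A. sm A 1 x = x)
    \<and> (\<forall>c d. \<forall>x\<in>carrier A. sm A (c * d) x = sm A c (sm A d x))
    \<and> (\<forall>c d. \<forall>x\<in>carrier A. sm A (c + d) x = sm A c x \<oplus>\<^bsub>A\<^esub> sm A d x)
    \<and> (\<forall>c. \<forall>x\<in>carrier A. \<forall>y\<in>carrier A. sm A c (x \<oplus>\<^bsub>A\<^esub> y) = sm A c x \<oplus>\<^bsub>A\<^esub> sm A c y)
    \<and> (\<forall>c. \<forall>x\<in>carrier A. \<forall>y\<in>carrier A.
          sm A c (x \<otimes>\<^bsub>A\<^esub> y) = sm A c x \<otimes>\<^bsub>A\<^esub> y
        \<and> sm A c (x \<otimes>\<^bsub>A\<^esub> y) = x \<otimes>\<^bsub>A\<^esub> sm A c y)"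

definition graded_algebra :: "('k::field, 'a) gralg \<Rightarrow> bool" where
  "graded_algebra A \<longleftrightarrow> k_algebra A
    \<and> (\<forall>n. grd A n \<subseteq> carrier A \<and> \<zero>\<^bsub>A\<^esub> \<in> grd A n
         \<and> (\<forall>x\<in>grd A n. \<forall>y\<in>grd A n. x \<oplus>\<^bsub>A\<^esub> y \<in> grd A n)
         \<and> (\<forall>c. \<forall>x\<in>grd A n. sm A c x \<in> grd A n))
    \<and> (\<forall>m n. \<forall>x\<in>grd A m. \<forall>y\<in>grd A n. x \<otimes>\<^bsub>A\<^esub> y \<in> grd A (m + n))
    \<and> (\<forall>x\<in>carrier A. \<exists>!c. (\<forall>n. c n \<in> grd A n) \<and> finite {n. c n \<noteq> \<zero>\<^bsub>A\<^esub>}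
                          \<and> x = finsum A c {n. c n \<noteq> \<zero>\<^bsub>A\<^esub>})"

text \<open>Homogeneous components of an element (meaningful for graded algebras).\<close>
definition hcomp :: "('k, 'a) gralg \<Rightarrow> 'a \<Rightarrow> nat \<Rightarrow> 'a" where
  "hcomp A x = (THE c. (\<forall>n. c n \<in> grd A n) \<and> finite {n. c n \<noteq> \<zero>\<^bsub>A\<^esub>}
                      \<and> x = finsum A c {n. c n \<noteq> \<zero>\<^bsub>A\<^esub>})"

definition grdZ :: "('k, 'a) gralg \<Rightarrow> int \<Rightarrow> 'a set" where
  "grdZ A m = (if m < 0 then {\<zero>\<^bsub>A\<^esub>} else grd A (nat m))"

definition graded_hom :: "('k, 'a) gralg \<Rightarrow> ('k, 'b) gralg \<Rightarrow> ('a \<Rightarrow> 'b) \<Rightarrow> bool" where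
  "graded_hom A B f \<longleftrightarrow> f \<in> carrier A \<rightarrow> carrier B
    \<and> (\<forall>x\<in>carrier A. \<forall>y\<in>carrier A. f (x \<oplus>\<^bsub>A\<^esub> y) = f x \<oplus>\<^bsub>B\<^esub> f y)
    \<and> (\<forall>x\<in>carrier A. \<forall>y\<in>carrier A. f (x \<otimes>\<^bsub>A\<^esub> y) = f x \<otimes>\<^bsub>B\<^esub> f y)
    \<and> f \<one>\<^bsub>A\<^esub> = \<one>\<^bsub>B\<^esub>
    \<and> (\<forall>c. \<forall>x\<in>carrier A. f (sm A c x) = sm B c (f x))
    \<and> (\<forall>n. f ` grd A n \<subseteq> grd B n)"

definition graded_iso :: "('k, 'a) gralg \<Rightarrow> ('k, 'b) gralg \<Rightarrow> ('a \<Rightarrow> 'b) \<Rightarrow> bool" where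
  "graded_iso A B f \<longleftrightarrow> graded_hom A B f \<and> bij_betw f (carrier A) (carrier B)
    \<and> (\<forall>n. f ` grd A n = grd B n)"

definition GrAut :: "('k, 'a) gralg \<Rightarrow> ('a \<Rightarrow> 'a) monoid" where
  "GrAut A = \<lparr>carrier = {g. g \<in> extensional (carrier A) \<and> graded_iso A A g},
              monoid.mult = (\<lambda>g h. compose (carrier A) g h),
              monoid.one = (\<lambda>x\<in>carrier A. x)\<rparr>"

text \<open>A(d)^(r) = direct sum over n of A_(rn+d), as a subset of A.\<close>
definition ver_shift :: "('k, 'a) gralg \<Rightarrow> nat \<Rightarrow> int \<Rightarrow> 'a set" where
  "ver_shift A r d = {x \<in> carrier A. \<forall>m. hcomp A x m \<noteq> \<zero>\<^bsub>A\<^esub> \<longrightarrow> int m mod int r = d mod int r}"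

text \<open>The r-th quasi-Veronese algebra A^[r]: r x r matrices (indices 0..r-1,
entries outside set to zero) with (i,j) entry in A(j-i)^(r), product
(a_ij)(b_ij) = (sum_k a_kj b_ik), degree n part: (i,j) entry in A_(rn+j-i).\<close>
definition qver :: "('k, 'a) gralg \<Rightarrow> nat \<Rightarrow> ('k, nat \<Rightarrow> nat \<Rightarrow> 'a) gralg" where
  "qver A r = \<lparr>carrier = {M. (\<forall>i j. (i < r \<and> j < r \<longrightarrow> M i j \<in> ver_shift A r (int j - int i))
                                  \<and> (\<not> (i < r \<and> j < r) \<longrightarrow> M i j = \<zero>\<^bsub>A\<^esub>))},
     monoid.mult = (\<lambda>M N i j. if i < r \<and> j < r
                        then finsum A (\<lambda>k. M k j \<otimes>\<^bsub>A\<^esub> N i k) {..<r} else \<zero>\<^bsub>A\<^esub>),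
     monoid.one = (\<lambda>i j. if i = j \<and> i < r then \<one>\<^bsub>A\<^esub> else \<zero>\<^bsub>A\<^esub>),
     ring.zero = (\<lambda>i j. \<zero>\<^bsub>A\<^esub>),
     ring.add = (\<lambda>M N i j. M i j \<oplus>\<^bsub>A\<^esub> N i j),
     sm = (\<lambda>c M i j. sm A c (M i j)),
     grd = (\<lambda>n. {M. (\<forall>i j. (i < r \<and> j < r \<longrightarrow> M i j \<in> grdZ A (int r * int n + int j - int i))
                          \<and> (\<not> (i < r \<and> j < r) \<longrightarrow> M i j = \<zero>\<^bsub>A\<^esub>))})\<rparr>"

text \<open>Skew group algebra B * G = B \<otimes>_k kG for a group G acting on B via act:
finitely supported functions G \<rightarrow> B (f g = coefficient of g), with
(a*g)(b*h) = a g(b) * gh, graded by B.\<close>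
definition skew :: "('k, 'b) gralg \<Rightarrow> 'g monoid \<Rightarrow> ('g \<Rightarrow> 'b \<Rightarrow> 'b) \<Rightarrow> ('k, 'g \<Rightarrow> 'b) gralg" where
  "skew B G act = \<lparr>carrier = {f. (\<forall>g. f g \<in> carrier B) \<and> (\<forall>g. g \<notin> carrier G \<longrightarrow> f g = \<zero>\<^bsub>B\<^esub>)
                              \<and> finite {g. f g \<noteq> \<zero>\<^bsub>B\<^esub>}},
     monoid.mult = (\<lambda>f h x. if x \<in> carrier G
                      then finsum B (\<lambda>g. f g \<otimes>\<^bsub>B\<^esub> act g (h (inv\<^bsub>G\<^esub> g \<otimes>\<^bsub>G\<^esub> x)))
                                    {g \<in> carrier G. f g \<noteq> \<zero>\<^bsub>B\<^esub>}
                      else \<zero>\<^bsub>B\<^esub>),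
     monoid.one = (\<lambda>g. if g = \<one>\<^bsub>G\<^esub> then \<one>\<^bsub>B\<^esub> else \<zero>\<^bsub>B\<^esub>),
     ring.zero = (\<lambda>g. \<zero>\<^bsub>B\<^esub>),
     ring.add = (\<lambda>f h g. f g \<oplus>\<^bsub>B\<^esub> h g),
     sm = (\<lambda>c f g. sm B c (f g)),
     grd = (\<lambda>n. {f. (\<forall>g. f g \<in> grd B n) \<and> (\<forall>g. g \<notin> carrier G \<longrightarrow> f g = \<zero>\<^bsub>B\<^esub>)
                      \<and> finite {g. f g \<noteq> \<zero>\<^bsub>B\<^esub>}})\<rparr>"

end

theory Submission
  imports Defs
begin


lemma finsum_hom:
  assumes S: "abelian_monoid S" and T: "abelian_monoid T" and fin: "finite I"
    and F: "F \<in> I \<rightarrow> carrier S"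
    and add: "\<And>x y. x \<in> carrier S \<Longrightarrow> y \<in> carrier S \<Longrightarrow> e (x \<oplus>\<^bsub>S\<^esub> y) = e x \<oplus>\<^bsub>T\<^esub> e y"
    and zero: "e \<zero>\<^bsub>S\<^esub> = \<zero>\<^bsub>T\<^esub>"
    and cl: "\<And>x. x \<in> carrier S \<Longrightarrow> e x \<in> carrier T"
  shows "e (finsum S F I) = finsum T (\<lambda>i. e (F i)) I"
  using fin F
proof (induction I rule: finite_induct)
  case empty
  then show ?case by (simp add: abelian_monoid.finsum_empty[OF S] abelian_monoid.finsum_empty[OF T] zero)
next
  case (insert a I)
  have "finsum S F (insert a I) = F a \<oplus>\<^bsub>S\<^esub> finsum S F I"
    by (rule abelian_monoid.finsum_insert[OF S]) (use insert in auto)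
  moreover have "finsum T (\<lambda>i. e (F i)) (insert a I) = e (F a) \<oplus>\<^bsub>T\<^esub> finsum T (\<lambda>i. e (F i)) I"
    by (rule abelian_monoid.finsum_insert[OF T]) (use insert cl in auto)
  moreover have "finsum S F I \<in> carrier S"
    by (rule abelian_monoid.finsum_closed[OF S]) (use insert in auto)
  ultimately show ?case using insert add by auto
qed

lemma finsum_swap:
  assumes S: "abelian_monoid S" and fI: "finite I" and fJ: "finite J"
    and F: "\<And>i j. i \<in> I \<Longrightarrow> j \<in> J \<Longrightarrow> F i j \<in> carrier S"
  shows "finsum S (\<lambda>i. finsum S (\<lambda>j. F i j) J) I = finsum S (\<lambda>j. finsum S (\<lambda>i. F i j) I) J"
  using fI F
proof (induction I rule: finite_induct)
  case empty
  then show ?case by (simp add: abelian_monoid.finsum_empty[OF S] abelian_monoid.finsum_zero[OF S])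
next
  case (insert a I)
  have "finsum S (\<lambda>i. finsum S (\<lambda>j. F i j) J) (insert a I)
     = finsum S (\<lambda>j. F a j) J \<oplus>\<^bsub>S\<^esub> finsum S (\<lambda>i. finsum S (\<lambda>j. F i j) J) I"
    by (rule abelian_monoid.finsum_insert[OF S]) (use insert in \<open>auto intro!: abelian_monoid.finsum_closed[OF S]\<close>)
  also have "\<dots> = finsum S (\<lambda>j. F a j) J \<oplus>\<^bsub>S\<^esub> finsum S (\<lambda>j. finsum S (\<lambda>i. F i j) I) J"
    using insert by auto
  also have "\<dots> = finsum S (\<lambda>j. F a j \<oplus>\<^bsub>S\<^esub> finsum S (\<lambda>i. F i j) I) J"
    by (rule abelian_monoid.finsum_addf[OF S, symmetric]) (use insert in \<open>auto intro!: abelian_monoid.finsum_closed[OF S]\<close>)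
  also have "\<dots> = finsum S (\<lambda>j. finsum S (\<lambda>i. F i j) (insert a I)) J"
    apply (rule abelian_monoid.finsum_cong'[OF S])
      apply simp
     apply (use insert in \<open>auto intro!: abelian_monoid.finsum_closed[OF S]\<close>)[1]
    apply (rule abelian_monoid.finsum_insert[OF S, symmetric])
    using insert by auto
  finally show ?case .
qed

lemma (in abelian_monoid) finsum_mnc_left:
  assumes "finite B" and "A \<subseteq> B" and "\<And>i. i \<in> B - A \<Longrightarrow> h i = \<zero>"
    and "\<And>x. x \<in> A \<Longrightarrow> g x = h x" and "h \<in> B \<rightarrow> carrier G"
  shows "finsum G g A = finsum G h B"
  by (rule add.finprod_mono_neutral_cong_left) (use assms in auto)

definition decomp :: "('k, 'a) gralg \<Rightarrow> 'a \<Rightarrow> (nat \<Rightarrow> 'a) \<Rightarrow> bool" where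
  "decomp S x c \<longleftrightarrow> (\<forall>n. c n \<in> grd S n) \<and> finite {n. c n \<noteq> \<zero>\<^bsub>S\<^esub>}
                      \<and> x = finsum S c {n. c n \<noteq> \<zero>\<^bsub>S\<^esub>}"

lemma hcomp_decomp: "\<exists>!c. decomp S x c \<Longrightarrow> decomp S x (hcomp S x)"
proof -
  assume a: "\<exists>!c. decomp S x c"
  have "hcomp S x = (THE c. decomp S x c)" by (simp add: hcomp_def decomp_def)
  then show ?thesis using theI'[OF a] by simp
qed

lemma hcomp_unique:
  assumes a: "\<exists>!c. decomp S x c" and b: "decomp S x c0"
  shows "hcomp S x = c0"
proof -
  have u: "\<And>y z. decomp S x y \<Longrightarrow> decomp S x z \<Longrightarrow> y = z" using a by (metis ex1E)
  show ?thesis by (rule u[OF hcomp_decomp[OF a] b])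
qed

lemma ver_shift_iff:
  assumes u: "\<And>x. x \<in> carrier S \<Longrightarrow> \<exists>!c. decomp S x c"
  shows "x \<in> ver_shift S r d \<longleftrightarrow> x \<in> carrier S \<and>
     (\<exists>c. decomp S x c \<and> (\<forall>m. c m \<noteq> \<zero>\<^bsub>S\<^esub> \<longrightarrow> int m mod int r = d mod int r))"
proof
  assume a: "x \<in> ver_shift S r d"
  then have x: "x \<in> carrier S" unfolding ver_shift_def by simp
  show "x \<in> carrier S \<and>
     (\<exists>c. decomp S x c \<and> (\<forall>m. c m \<noteq> \<zero>\<^bsub>S\<^esub> \<longrightarrow> int m mod int r = d mod int r))"
  proof (intro conjI x exI[of _ "hcomp S x"])
    show "decomp S x (hcomp S x)" by (rule hcomp_decomp[OF u[OF x]])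
    show "\<forall>m. hcomp S x m \<noteq> \<zero>\<^bsub>S\<^esub> \<longrightarrow> int m mod int r = d mod int r"
      using a unfolding ver_shift_def by blast
  qed
next
  assume a: "x \<in> carrier S \<and>
     (\<exists>c. decomp S x c \<and> (\<forall>m. c m \<noteq> \<zero>\<^bsub>S\<^esub> \<longrightarrow> int m mod int r = d mod int r))"
  then obtain c where x: "x \<in> carrier S" and c: "decomp S x c"
    and m: "\<forall>m. c m \<noteq> \<zero>\<^bsub>S\<^esub> \<longrightarrow> int m mod int r = d mod int r" by blast
  have "hcomp S x = c" by (rule hcomp_unique[OF u[OF x] c])
  then show "x \<in> ver_shift S r d" using x m unfolding ver_shift_def by simp
qed

lemma decomp_sup:
  assumes S: "abelian_monoid S" and d: "decomp S x c" and T: "finite T" and sub: "{n. c n \<noteq> \<zero>\<^bsub>S\<^esub>} \<subseteq> T"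
    and g: "\<And>n. grd S n \<subseteq> carrier S"
  shows "x = finsum S c T"
proof -
  have x: "x = finsum S c {n. c n \<noteq> \<zero>\<^bsub>S\<^esub>}" using d unfolding decomp_def by blast
  have cg: "\<And>n. c n \<in> grd S n" using d unfolding decomp_def by blast
  have "finsum S c {n. c n \<noteq> \<zero>\<^bsub>S\<^esub>} = finsum S c T"
  proof (rule abelian_monoid.finsum_mnc_left[OF S T sub])
    show "\<And>i. i \<in> T - {n. c n \<noteq> \<zero>\<^bsub>S\<^esub>} \<Longrightarrow> c i = \<zero>\<^bsub>S\<^esub>" by simp
    show "c \<in> T \<rightarrow> carrier S" using cg g by blast
  qed simp
  with x show ?thesis by simp
qed

lemma decompI:
  assumes S: "abelian_monoid S" and cg: "\<And>n. c n \<in> grd S n" and T: "finite T" and sub: "{n. c n \<noteq> \<zero>\<^bsub>S\<^esub>} \<subseteq> T"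
    and g: "\<And>n. grd S n \<subseteq> carrier S" and x: "x = finsum S c T"
  shows "decomp S x c"
proof -
  have "finsum S c {n. c n \<noteq> \<zero>\<^bsub>S\<^esub>} = finsum S c T"
  proof (rule abelian_monoid.finsum_mnc_left[OF S T sub])
    show "\<And>i. i \<in> T - {n. c n \<noteq> \<zero>\<^bsub>S\<^esub>} \<Longrightarrow> c i = \<zero>\<^bsub>S\<^esub>" by simp
    show "c \<in> T \<rightarrow> carrier S" using cg g by blast
  qed simp
  moreover have "finite {n. c n \<noteq> \<zero>\<^bsub>S\<^esub>}" using T sub by (rule finite_subset[rotated])
  ultimately show ?thesis unfolding decomp_def using cg x by simp
qed



lemma decomp_grd: "decomp S x c \<Longrightarrow> c n \<in> grd S n"
  unfolding decomp_def by blast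
lemma decomp_fin: "decomp S x c \<Longrightarrow> finite {n. c n \<noteq> \<zero>\<^bsub>S\<^esub>}"
  unfolding decomp_def by blast
lemma decomp_eq: "decomp S x c \<Longrightarrow> x = finsum S c {n. c n \<noteq> \<zero>\<^bsub>S\<^esub>}"
  unfolding decomp_def by blast

lemma ga_ring: "graded_algebra A \<Longrightarrow> ring A"
  unfolding graded_algebra_def k_algebra_def by blast

lemma ga_am: "graded_algebra A \<Longrightarrow> abelian_monoid A"
  using ga_ring ring.is_abelian_group abelian_group.axioms(1) by blast

lemma ga_grd_sub: "graded_algebra A \<Longrightarrow> grd A n \<subseteq> carrier A"
  unfolding graded_algebra_def by blast

lemma ga_grd_zero: "graded_algebra A \<Longrightarrow> \<zero>\<^bsub>A\<^esub> \<in> grd A n"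
  unfolding graded_algebra_def by blast

lemma ga_grd_add: "graded_algebra A \<Longrightarrow> x \<in> grd A n \<Longrightarrow> y \<in> grd A n \<Longrightarrow> x \<oplus>\<^bsub>A\<^esub> y \<in> grd A n"
  unfolding graded_algebra_def by blast

lemma ga_grd_mult: "graded_algebra A \<Longrightarrow> x \<in> grd A n \<Longrightarrow> y \<in> grd A m \<Longrightarrow> x \<otimes>\<^bsub>A\<^esub> y \<in> grd A (n + m)"
  unfolding graded_algebra_def by blast

lemma ga_unique: "graded_algebra A \<Longrightarrow> x \<in> carrier A \<Longrightarrow> \<exists>!c. decomp A x c"
  unfolding graded_algebra_def decomp_def by blast

lemma vs_iff: "graded_algebra A \<Longrightarrow> x \<in> ver_shift A r d \<longleftrightarrow> x \<in> carrier A \<and>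
     (\<exists>c. decomp A x c \<and> (\<forall>m. c m \<noteq> \<zero>\<^bsub>A\<^esub> \<longrightarrow> int m mod int r = d mod int r))"
  by (rule ver_shift_iff) (rule ga_unique)

lemma vs_carrier: "x \<in> ver_shift A r d \<Longrightarrow> x \<in> carrier A"
  unfolding ver_shift_def by simp

lemma vs_zero:
  assumes ga: "graded_algebra A"
  shows "\<zero>\<^bsub>A\<^esub> \<in> ver_shift A r d"
proof -
  interpret R: ring A by (rule ga_ring[OF ga])
  have "decomp A \<zero>\<^bsub>A\<^esub> (\<lambda>_. \<zero>\<^bsub>A\<^esub>)"
    by (rule decompI[OF ga_am[OF ga], of _ "{}"]) (auto simp: ga_grd_zero[OF ga] ga_grd_sub[OF ga])
  then show ?thesis using vs_iff[OF ga] by auto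
qed

lemma vs_hom:
  assumes ga: "graded_algebra A" and x: "x \<in> grd A n" and m: "int n mod int r = d mod int r"
  shows "x \<in> ver_shift A r d"
proof -
  interpret R: ring A by (rule ga_ring[OF ga])
  have xc: "x \<in> carrier A" using x ga_grd_sub[OF ga] by blast
  define c where "c = (\<lambda>m. if m = n then x else \<zero>\<^bsub>A\<^esub>)"
  have fs: "finsum A c {n} = x"
    using R.finsum_insert[of "{}" n c] xc by (simp add: c_def)
  have "decomp A x c"
    by (rule decompI[OF ga_am[OF ga], of _ "{n}"])
       (auto simp: c_def x ga_grd_zero[OF ga] ga_grd_sub[OF ga] fs[unfolded c_def])
  moreover have "\<forall>k. c k \<noteq> \<zero>\<^bsub>A\<^esub> \<longrightarrow> int k mod int r = d mod int r" using m by (simp add: c_def)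
  ultimately show ?thesis using vs_iff[OF ga] xc by blast
qed

lemma vs_add:
  assumes ga: "graded_algebra A" and x: "x \<in> ver_shift A r d" and y: "y \<in> ver_shift A r d"
  shows "x \<oplus>\<^bsub>A\<^esub> y \<in> ver_shift A r d"
proof -
  interpret R: ring A by (rule ga_ring[OF ga])
  obtain c where c: "decomp A x c" and cm: "\<forall>m. c m \<noteq> \<zero>\<^bsub>A\<^esub> \<longrightarrow> int m mod int r = d mod int r"
    using x vs_iff[OF ga] by blast
  obtain e where e: "decomp A y e" and em: "\<forall>m. e m \<noteq> \<zero>\<^bsub>A\<^esub> \<longrightarrow> int m mod int r = d mod int r"
    using y vs_iff[OF ga] by blast
  define T where "T = {n. c n \<noteq> \<zero>\<^bsub>A\<^esub>} \<union> {n. e n \<noteq> \<zero>\<^bsub>A\<^esub>}"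
  have fT: "finite T" using decomp_fin[OF c] decomp_fin[OF e] unfolding T_def by simp
  have cg: "\<And>n. c n \<in> carrier A" using decomp_grd[OF c] ga_grd_sub[OF ga] by blast
  have eg: "\<And>n. e n \<in> carrier A" using decomp_grd[OF e] ga_grd_sub[OF ga] by blast
  have xs: "x = finsum A c T"
    by (rule decomp_sup[OF ga_am[OF ga] c fT]) (auto simp: T_def ga_grd_sub[OF ga])
  have ys: "y = finsum A e T"
    by (rule decomp_sup[OF ga_am[OF ga] e fT]) (auto simp: T_def ga_grd_sub[OF ga])
  have xy: "x \<oplus>\<^bsub>A\<^esub> y = finsum A (\<lambda>n. c n \<oplus>\<^bsub>A\<^esub> e n) T"
    using R.finsum_addf[of c T e] cg eg xs ys by auto
  have "decomp A (x \<oplus>\<^bsub>A\<^esub> y) (\<lambda>n. c n \<oplus>\<^bsub>A\<^esub> e n)"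
  proof (rule decompI[OF ga_am[OF ga] _ fT _ ga_grd_sub[OF ga] xy])
    show "\<And>n. c n \<oplus>\<^bsub>A\<^esub> e n \<in> grd A n"
      using ga_grd_add[OF ga decomp_grd[OF c] decomp_grd[OF e]] by blast
    show "{n. c n \<oplus>\<^bsub>A\<^esub> e n \<noteq> \<zero>\<^bsub>A\<^esub>} \<subseteq> T" unfolding T_def by auto
  qed
  moreover have "\<forall>m. c m \<oplus>\<^bsub>A\<^esub> e m \<noteq> \<zero>\<^bsub>A\<^esub> \<longrightarrow> int m mod int r = d mod int r"
    using cm em R.l_zero[OF R.zero_closed] by metis
  moreover have "x \<oplus>\<^bsub>A\<^esub> y \<in> carrier A" using vs_carrier[OF x] vs_carrier[OF y] by simp
  ultimately show ?thesis using vs_iff[OF ga] by blast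
qed

lemma vs_finsum:
  assumes ga: "graded_algebra A" and fin: "finite I" and F: "\<And>i. i \<in> I \<Longrightarrow> F i \<in> ver_shift A r d"
  shows "finsum A F I \<in> ver_shift A r d"
  using fin F
proof (induction I rule: finite_induct)
  case empty
  then show ?case using vs_zero[OF ga] abelian_monoid.finsum_empty[OF ga_am[OF ga]] by metis
next
  case (insert a I)
  have "finsum A F (insert a I) = F a \<oplus>\<^bsub>A\<^esub> finsum A F I"
    by (rule abelian_monoid.finsum_insert[OF ga_am[OF ga]]) (use insert vs_carrier in \<open>blast intro: vs_carrier\<close>)+
  then show ?case using insert vs_add[OF ga] by simp
qed

lemma vs_mult:
  assumes ga: "graded_algebra A" and x: "x \<in> ver_shift A r d1" and y: "y \<in> ver_shift A r d2"
  shows "x \<otimes>\<^bsub>A\<^esub> y \<in> ver_shift A r (d1 + d2)"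
proof -
  interpret R: ring A by (rule ga_ring[OF ga])
  obtain c where c: "decomp A x c" and cm: "\<forall>m. c m \<noteq> \<zero>\<^bsub>A\<^esub> \<longrightarrow> int m mod int r = d1 mod int r"
    using x vs_iff[OF ga] by blast
  obtain e where e: "decomp A y e" and em: "\<forall>m. e m \<noteq> \<zero>\<^bsub>A\<^esub> \<longrightarrow> int m mod int r = d2 mod int r"
    using y vs_iff[OF ga] by blast
  define Sc where "Sc = {n. c n \<noteq> \<zero>\<^bsub>A\<^esub>}"
  define Se where "Se = {n. e n \<noteq> \<zero>\<^bsub>A\<^esub>}"
  have fc: "finite Sc" and fe: "finite Se" using decomp_fin[OF c] decomp_fin[OF e] unfolding Sc_def Se_def by auto
  have cg: "\<And>n. c n \<in> carrier A" using decomp_grd[OF c] ga_grd_sub[OF ga] by blast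
  have eg: "\<And>n. e n \<in> carrier A" using decomp_grd[OF e] ga_grd_sub[OF ga] by blast
  have xs: "x = finsum A c Sc" using decomp_eq[OF c] unfolding Sc_def by blast
  have ys: "y = finsum A e Se" using decomp_eq[OF e] unfolding Se_def by blast
  have yc: "y \<in> carrier A" by (rule vs_carrier[OF y])
  have "x \<otimes>\<^bsub>A\<^esub> y = finsum A (\<lambda>n. c n \<otimes>\<^bsub>A\<^esub> y) Sc"
    using R.finsum_ldistr[OF fc yc, of c] cg xs by auto
  also have "\<dots> = finsum A (\<lambda>n. finsum A (\<lambda>m. c n \<otimes>\<^bsub>A\<^esub> e m) Se) Sc"
    by (rule R.finsum_cong') (use R.finsum_rdistr[OF fe] cg eg ys in auto)
  finally have eq: "x \<otimes>\<^bsub>A\<^esub> y = finsum A (\<lambda>n. finsum A (\<lambda>m. c n \<otimes>\<^bsub>A\<^esub> e m) Se) Sc" .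
  have "finsum A (\<lambda>n. finsum A (\<lambda>m. c n \<otimes>\<^bsub>A\<^esub> e m) Se) Sc \<in> ver_shift A r (d1 + d2)"
  proof (rule vs_finsum[OF ga fc], rule vs_finsum[OF ga fe])
    fix n m assume n: "n \<in> Sc" and m: "m \<in> Se"
    have "c n \<otimes>\<^bsub>A\<^esub> e m \<in> grd A (n + m)"
      by (rule ga_grd_mult[OF ga decomp_grd[OF c] decomp_grd[OF e]])
    moreover have "int (n + m) mod int r = (d1 + d2) mod int r"
    proof -
      have "int n mod int r = d1 mod int r" using cm n unfolding Sc_def by blast
      moreover have "int m mod int r = d2 mod int r" using em m unfolding Se_def by blast
      ultimately have "(int n + int m) mod int r = (d1 + d2) mod int r" by (rule mod_add_cong)
      then show ?thesis by simp
    qed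
    ultimately show "c n \<otimes>\<^bsub>A\<^esub> e m \<in> ver_shift A r (d1 + d2)" by (rule vs_hom[OF ga])
  qed
  then show ?thesis using eq by simp
qed

lemma graut_iso: "g \<in> carrier (GrAut A) \<Longrightarrow> graded_iso A A g"
  unfolding GrAut_def by simp

lemma graut_props:
  assumes ga: "graded_algebra A" and g: "g \<in> carrier (GrAut A)"
  shows "\<And>x. x \<in> carrier A \<Longrightarrow> g x \<in> carrier A"
    and "\<And>x y. x \<in> carrier A \<Longrightarrow> y \<in> carrier A \<Longrightarrow> g (x \<oplus>\<^bsub>A\<^esub> y) = g x \<oplus>\<^bsub>A\<^esub> g y"
    and "g \<zero>\<^bsub>A\<^esub> = \<zero>\<^bsub>A\<^esub>"
    and "\<And>x. x \<in> grd A n \<Longrightarrow> g x \<in> grd A n"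
proof -
  interpret R: ring A by (rule ga_ring[OF ga])
  have h: "graded_hom A A g" using graut_iso[OF g] unfolding graded_iso_def by blast
  show c: "\<And>x. x \<in> carrier A \<Longrightarrow> g x \<in> carrier A" using h unfolding graded_hom_def by blast
  show a: "\<And>x y. x \<in> carrier A \<Longrightarrow> y \<in> carrier A \<Longrightarrow> g (x \<oplus>\<^bsub>A\<^esub> y) = g x \<oplus>\<^bsub>A\<^esub> g y"
    using h unfolding graded_hom_def by blast
  show "\<And>x. x \<in> grd A n \<Longrightarrow> g x \<in> grd A n" using h unfolding graded_hom_def by blast
  have z: "g \<zero>\<^bsub>A\<^esub> \<in> carrier A" using c by simp
  have "g \<zero>\<^bsub>A\<^esub> = g \<zero>\<^bsub>A\<^esub> \<oplus>\<^bsub>A\<^esub> g \<zero>\<^bsub>A\<^esub>"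
    using a[of "\<zero>\<^bsub>A\<^esub>" "\<zero>\<^bsub>A\<^esub>"] by simp
  then show "g \<zero>\<^bsub>A\<^esub> = \<zero>\<^bsub>A\<^esub>" using R.add.l_cancel_one'[OF z z] by blast
qed

lemma vs_aut:
  assumes ga: "graded_algebra A" and g: "g \<in> carrier (GrAut A)" and x: "x \<in> ver_shift A r d"
  shows "g x \<in> ver_shift A r d"
proof -
  interpret R: ring A by (rule ga_ring[OF ga])
  note gp = graut_props[OF ga g]
  obtain c where c: "decomp A x c" and cm: "\<forall>m. c m \<noteq> \<zero>\<^bsub>A\<^esub> \<longrightarrow> int m mod int r = d mod int r"
    using x vs_iff[OF ga] by blast
  define Sc where "Sc = {n. c n \<noteq> \<zero>\<^bsub>A\<^esub>}"
  have fc: "finite Sc" using decomp_fin[OF c] unfolding Sc_def by auto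
  have cg: "\<And>n. c n \<in> carrier A" using decomp_grd[OF c] ga_grd_sub[OF ga] by blast
  have xs: "x = finsum A c Sc" using decomp_eq[OF c] unfolding Sc_def by blast
  have gx: "g x = finsum A (\<lambda>n. g (c n)) Sc"
    unfolding xs by (rule finsum_hom[OF ga_am[OF ga] ga_am[OF ga] fc]) (use cg gp in auto)
  have "decomp A (g x) (\<lambda>n. g (c n))"
  proof (rule decompI[OF ga_am[OF ga] _ fc _ ga_grd_sub[OF ga] gx])
    show "\<And>n. g (c n) \<in> grd A n" using gp(4)[OF decomp_grd[OF c]] by blast
    show "{n. g (c n) \<noteq> \<zero>\<^bsub>A\<^esub>} \<subseteq> Sc" unfolding Sc_def using gp(3) by auto
  qed
  moreover have "\<forall>m. g (c m) \<noteq> \<zero>\<^bsub>A\<^esub> \<longrightarrow> int m mod int r = d mod int r" using cm gp(3) by metis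
  moreover have "g x \<in> carrier A" using gp(1) vs_carrier[OF x] by blast
  ultimately show ?thesis using vs_iff[OF ga] by blast
qed



lemma graut_carrier: "g \<in> carrier (GrAut A) \<longleftrightarrow> g \<in> extensional (carrier A) \<and> graded_iso A A g"
  unfolding GrAut_def by simp

lemma graut_mult: "g \<otimes>\<^bsub>GrAut A\<^esub> h = compose (carrier A) g h"
  unfolding GrAut_def by simp

lemma graut_one: "\<one>\<^bsub>GrAut A\<^esub> = (\<lambda>x\<in>carrier A. x)"
  unfolding GrAut_def by simp

lemma iso_hom: "graded_iso A B g \<Longrightarrow> graded_hom A B g"
  unfolding graded_iso_def by (rule conjunct1)
lemma iso_bij: "graded_iso A B g \<Longrightarrow> bij_betw g (carrier A) (carrier B)"
  unfolding graded_iso_def by (rule conjunct1[OF conjunct2])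
lemma iso_im: "graded_iso A B g \<Longrightarrow> g ` grd A n = grd B n"
  unfolding graded_iso_def by (drule conjunct2[OF conjunct2]) (erule spec)

lemma hom_pi: "graded_hom A B g \<Longrightarrow> x \<in> carrier A \<Longrightarrow> g x \<in> carrier B"
  unfolding graded_hom_def by blast
lemma hom_add: "graded_hom A B g \<Longrightarrow> x \<in> carrier A \<Longrightarrow> y \<in> carrier A \<Longrightarrow> g (x \<oplus>\<^bsub>A\<^esub> y) = g x \<oplus>\<^bsub>B\<^esub> g y"
  unfolding graded_hom_def by blast
lemma hom_mult: "graded_hom A B g \<Longrightarrow> x \<in> carrier A \<Longrightarrow> y \<in> carrier A \<Longrightarrow> g (x \<otimes>\<^bsub>A\<^esub> y) = g x \<otimes>\<^bsub>B\<^esub> g y"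
  unfolding graded_hom_def by blast
lemma hom_one: "graded_hom A B g \<Longrightarrow> g \<one>\<^bsub>A\<^esub> = \<one>\<^bsub>B\<^esub>"
  unfolding graded_hom_def by blast
lemma hom_sm: "graded_hom A B g \<Longrightarrow> x \<in> carrier A \<Longrightarrow> g (sm A c x) = sm B c (g x)"
  unfolding graded_hom_def by blast
lemma hom_grd: "graded_hom A B g \<Longrightarrow> x \<in> grd A n \<Longrightarrow> g x \<in> grd B n"
  unfolding graded_hom_def by blast

lemma ka_sm:
  assumes "graded_algebra A" "x \<in> carrier A" shows "sm A c x \<in> carrier A"
proof -
  have "k_algebra A" using assms(1) unfolding graded_algebra_def by (rule conjunct1)
  then have "\<forall>c. \<forall>x\<in>carrier A. sm A c x \<in> carrier A" unfolding k_algebra_def by (rule conjunct2[THEN conjunct1])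
  then show ?thesis using assms(2) by blast
qed

lemma iso_compose:
  assumes ga: "graded_algebra A" and g: "graded_iso A A g" and h: "graded_iso A A h"
  shows "graded_iso A A (compose (carrier A) g h)"
proof -
  interpret R: ring A by (rule ga_ring[OF ga])
  let ?C = "carrier A"
  let ?k = "compose ?C g h"
  have gh: "graded_hom A A g" "graded_hom A A h" using iso_hom[OF g] iso_hom[OF h] by auto
  have gc: "\<And>x. x \<in> ?C \<Longrightarrow> g x \<in> ?C" and hc: "\<And>x. x \<in> ?C \<Longrightarrow> h x \<in> ?C"
    using hom_pi[OF gh(1)] hom_pi[OF gh(2)] by auto
  have k: "\<And>x. x \<in> ?C \<Longrightarrow> ?k x = g (h x)" by (simp add: compose_eq)
  have gs: "\<And>n. grd A n \<subseteq> ?C" using ga_grd_sub[OF ga] by blast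
  have "graded_hom A A ?k"
    unfolding graded_hom_def
  proof (intro conjI ballI allI)
    show "?k \<in> ?C \<rightarrow> ?C" using k gc hc by auto
    fix x y assume x: "x \<in> ?C" and y: "y \<in> ?C"
    show "?k (x \<oplus>\<^bsub>A\<^esub> y) = ?k x \<oplus>\<^bsub>A\<^esub> ?k y"
      using x y k hom_add[OF gh(1)] hom_add[OF gh(2)] hc by simp
    show "?k (x \<otimes>\<^bsub>A\<^esub> y) = ?k x \<otimes>\<^bsub>A\<^esub> ?k y"
      using x y k hom_mult[OF gh(1)] hom_mult[OF gh(2)] hc by simp
  next
    show "?k \<one>\<^bsub>A\<^esub> = \<one>\<^bsub>A\<^esub>" using k hom_one[OF gh(1)] hom_one[OF gh(2)] by simp
  next
    fix c x assume x: "x \<in> ?C"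
    show "?k (sm A c x) = sm A c (?k x)"
      using x k hom_sm[OF gh(1)] hom_sm[OF gh(2)] hc ka_sm[OF ga] by simp
  next
    fix n
    show "?k ` grd A n \<subseteq> grd A n"
    proof
      fix z assume "z \<in> ?k ` grd A n"
      then obtain x where x: "x \<in> grd A n" and z: "z = ?k x" by blast
      have "g (h x) \<in> grd A n" by (rule hom_grd[OF gh(1) hom_grd[OF gh(2) x]])
      moreover have "x \<in> carrier A" using gs x by blast
      ultimately show "z \<in> grd A n" using z k by simp
    qed
  qed
  moreover have "bij_betw ?k ?C ?C"
  proof -
    have "bij_betw (g \<circ> h) ?C ?C" by (rule bij_betw_trans[OF iso_bij[OF h] iso_bij[OF g]])
    moreover have "bij_betw ?k ?C ?C = bij_betw (g \<circ> h) ?C ?C" by (rule bij_betw_cong) (simp add: k)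
    ultimately show ?thesis by simp
  qed
  moreover have "\<forall>n. ?k ` grd A n = grd A n"
  proof
    fix n
    have "?k ` grd A n = (g \<circ> h) ` grd A n"
      by (rule image_cong) (use k gs in auto)
    also have "\<dots> = g ` h ` grd A n" by (rule image_comp[symmetric])
    also have "\<dots> = grd A n" using iso_im[OF g] iso_im[OF h] by simp
    finally show "?k ` grd A n = grd A n" .
  qed
  ultimately show ?thesis unfolding graded_iso_def by blast
qed

lemma iso_id:
  assumes ga: "graded_algebra A"
  shows "graded_iso A A (\<lambda>x\<in>carrier A. x)"
proof -
  interpret R: ring A by (rule ga_ring[OF ga])
  have gs: "\<And>n. grd A n \<subseteq> carrier A" using ga_grd_sub[OF ga] by blast
  have im: "\<And>n. (\<lambda>x\<in>carrier A. x) ` grd A n = grd A n"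
  proof -
    fix n
    have "(\<lambda>x\<in>carrier A. x) ` grd A n = id ` grd A n" by (rule image_cong) (use gs in auto)
    then show "(\<lambda>x\<in>carrier A. x) ` grd A n = grd A n" by simp
  qed
  have "bij_betw (\<lambda>x\<in>carrier A. x) (carrier A) (carrier A)"
    using bij_betw_cong[of "carrier A" "\<lambda>x\<in>carrier A. x" id "carrier A"] by simp
  then show ?thesis
    unfolding graded_iso_def graded_hom_def using im ka_sm[OF ga] by auto
qed

lemma iso_inv:
  assumes ga: "graded_algebra A" and g: "graded_iso A A g"
  shows "graded_iso A A (\<lambda>y\<in>carrier A. inv_into (carrier A) g y)"
proof -
  interpret R: ring A by (rule ga_ring[OF ga])
  let ?C = "carrier A"
  let ?y = "\<lambda>y\<in>carrier A. inv_into (carrier A) g y"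
  have gh: "graded_hom A A g" and b: "bij_betw g ?C ?C" and gim: "\<And>n. g ` grd A n = grd A n"
    using iso_hom[OF g] iso_bij[OF g] iso_im[OF g] by auto
  note gc = hom_pi[OF gh] and ga' = hom_add[OF gh] and gm = hom_mult[OF gh] and g1 = hom_one[OF gh]
    and gsm = hom_sm[OF gh]
  have yc: "\<And>x. x \<in> ?C \<Longrightarrow> ?y x \<in> ?C"
    using bij_betw_inv_into[OF b] bij_betwE by fastforce
  have ly: "\<And>x. x \<in> ?C \<Longrightarrow> ?y (g x) = x" using bij_betw_inv_into_left[OF b] gc by simp
  have ry: "\<And>x. x \<in> ?C \<Longrightarrow> g (?y x) = x" using bij_betw_inv_into_right[OF b] by simp
  have gs: "\<And>n. grd A n \<subseteq> ?C" using ga_grd_sub[OF ga] by blast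
  have yadd: "\<And>a c. a \<in> ?C \<Longrightarrow> c \<in> ?C \<Longrightarrow> ?y (a \<oplus>\<^bsub>A\<^esub> c) = ?y a \<oplus>\<^bsub>A\<^esub> ?y c"
  proof -
    fix a c assume a: "a \<in> ?C" and c: "c \<in> ?C"
    have "a \<oplus>\<^bsub>A\<^esub> c = g (?y a \<oplus>\<^bsub>A\<^esub> ?y c)" using ga' yc a c ry by simp
    then show "?y (a \<oplus>\<^bsub>A\<^esub> c) = ?y a \<oplus>\<^bsub>A\<^esub> ?y c" using ly yc a c by simp
  qed
  have ymul: "\<And>a c. a \<in> ?C \<Longrightarrow> c \<in> ?C \<Longrightarrow> ?y (a \<otimes>\<^bsub>A\<^esub> c) = ?y a \<otimes>\<^bsub>A\<^esub> ?y c"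
  proof -
    fix a c assume a: "a \<in> ?C" and c: "c \<in> ?C"
    have "a \<otimes>\<^bsub>A\<^esub> c = g (?y a \<otimes>\<^bsub>A\<^esub> ?y c)" using gm yc a c ry by simp
    then show "?y (a \<otimes>\<^bsub>A\<^esub> c) = ?y a \<otimes>\<^bsub>A\<^esub> ?y c" using ly yc a c by simp
  qed
  have y1: "?y \<one>\<^bsub>A\<^esub> = \<one>\<^bsub>A\<^esub>" using ly[of "\<one>\<^bsub>A\<^esub>"] g1 by simp
  have ysm: "\<And>c a. a \<in> ?C \<Longrightarrow> ?y (sm A c a) = sm A c (?y a)"
  proof -
    fix c a assume a: "a \<in> ?C"
    have "sm A c a = g (sm A c (?y a))" using gsm yc a ry by simp
    then show "?y (sm A c a) = sm A c (?y a)" using ly ka_sm[OF ga] yc a by simp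
  qed
  have yim: "\<And>n. ?y ` grd A n = grd A n"
  proof
    fix n
    show "?y ` grd A n \<subseteq> grd A n"
    proof
      fix z assume "z \<in> ?y ` grd A n"
      then obtain b where bb: "b \<in> grd A n" and z: "z = ?y b" by blast
      from bb gim[of n] obtain a where a: "a \<in> grd A n" and ba: "b = g a" by blast
      have "a \<in> carrier A" using a gs by blast
      then have "?y (g a) = a" by (rule ly)
      then show "z \<in> grd A n" using z ba a by simp
    qed
    show "grd A n \<subseteq> ?y ` grd A n"
    proof
      fix a assume a: "a \<in> grd A n"
      have "g a \<in> grd A n" using a gim by blast
      moreover have "a \<in> carrier A" using a gs by blast
      then have "a = ?y (g a)" using ly by simp
      ultimately show "a \<in> ?y ` grd A n" by blast
    qed
  qed
  have "bij_betw ?y ?C ?C"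
    using bij_betw_cong[of ?C ?y "inv_into ?C g" ?C] bij_betw_inv_into[OF b] by simp
  then show ?thesis
    unfolding graded_iso_def graded_hom_def
    using yc yadd ymul y1 ysm yim by (auto simp del: restrict_apply)
qed

lemma graut_closed:
  assumes ga: "graded_algebra A" and x: "x \<in> carrier (GrAut A)" and y: "y \<in> carrier (GrAut A)"
  shows "x \<otimes>\<^bsub>GrAut A\<^esub> y \<in> carrier (GrAut A)"
proof -
  have "graded_iso A A x" "graded_iso A A y" using x y by (simp_all only: graut_carrier)
  then have "graded_iso A A (compose (carrier A) x y)" by (rule iso_compose[OF ga])
  then have "compose (carrier A) x y \<in> carrier (GrAut A)" by (simp only: graut_carrier compose_extensional simp_thms)
  then show ?thesis by (simp only: graut_mult)
qed

lemma graut_one_closed: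
  assumes ga: "graded_algebra A"
  shows "\<one>\<^bsub>GrAut A\<^esub> \<in> carrier (GrAut A)"
proof -
  have "(\<lambda>x\<in>carrier A. x) \<in> extensional (carrier A)" by (rule restrict_extensional)
  moreover note iso_id[OF ga]
  ultimately have "(\<lambda>x\<in>carrier A. x) \<in> carrier (GrAut A)" by (simp only: graut_carrier)
  then show ?thesis by (simp only: graut_one)
qed

lemma graut_assoc:
  assumes x: "x \<in> carrier (GrAut A)" and y: "y \<in> carrier (GrAut A)" and z: "z \<in> carrier (GrAut A)"
  shows "x \<otimes>\<^bsub>GrAut A\<^esub> y \<otimes>\<^bsub>GrAut A\<^esub> z = x \<otimes>\<^bsub>GrAut A\<^esub> (y \<otimes>\<^bsub>GrAut A\<^esub> z)"
proof -
  have h: "graded_hom A A z" by (rule iso_hom[OF graut_iso[OF z]])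
  have "z \<in> carrier A \<rightarrow> carrier A" by (rule funcsetI) (rule hom_pi[OF h])
  then show ?thesis unfolding graut_mult by (rule compose_assoc[symmetric])
qed

lemma graut_l_one:
  assumes x: "x \<in> carrier (GrAut A)"
  shows "\<one>\<^bsub>GrAut A\<^esub> \<otimes>\<^bsub>GrAut A\<^esub> x = x"
proof -
  have e: "x \<in> extensional (carrier A)" using x unfolding GrAut_def by simp
  have g: "graded_iso A A x" by (rule graut_iso[OF x])
  note p = hom_pi[OF iso_hom[OF g]]
  show ?thesis
    unfolding graut_mult graut_one
  proof
    fix a show "compose (carrier A) (\<lambda>x\<in>carrier A. x) x a = x a"
    proof (cases "a \<in> carrier A")
      case True then show ?thesis using p by (simp add: compose_def)
    next
      case False then show ?thesis using e by (simp add: compose_def extensional_def)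
    qed
  qed
qed

lemma graut_l_inv:
  assumes ga: "graded_algebra A" and x: "x \<in> carrier (GrAut A)"
  shows "\<exists>y\<in>carrier (GrAut A). y \<otimes>\<^bsub>GrAut A\<^esub> x = \<one>\<^bsub>GrAut A\<^esub>"
proof -
  have g: "graded_iso A A x" by (rule graut_iso[OF x])
  have b: "bij_betw x (carrier A) (carrier A)" by (rule iso_bij[OF g])
  have "(\<lambda>y\<in>carrier A. inv_into (carrier A) x y) \<otimes>\<^bsub>GrAut A\<^esub> x = \<one>\<^bsub>GrAut A\<^esub>"
    unfolding graut_mult graut_one by (rule compose_inv_into_id[OF b])
  moreover have "(\<lambda>y\<in>carrier A. inv_into (carrier A) x y) \<in> carrier (GrAut A)"
  proof -
    have "(\<lambda>y\<in>carrier A. inv_into (carrier A) x y) \<in> extensional (carrier A)" by (rule restrict_extensional)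
    moreover note iso_inv[OF ga g]
    ultimately show ?thesis by (simp only: graut_carrier)
  qed
  ultimately show ?thesis by blast
qed

lemma graut_group:
  assumes ga: "graded_algebra A"
  shows "group (GrAut A)"
  by (rule groupI) (auto intro: graut_closed[OF ga] graut_one_closed[OF ga] graut_assoc graut_l_one graut_l_inv[OF ga])



lemma skew_simps:
  "carrier (skew B G act) = {f. (\<forall>g. f g \<in> carrier B) \<and> (\<forall>g. g \<notin> carrier G \<longrightarrow> f g = \<zero>\<^bsub>B\<^esub>)
                              \<and> finite {g. f g \<noteq> \<zero>\<^bsub>B\<^esub>}}"
  "x \<oplus>\<^bsub>skew B G act\<^esub> y = (\<lambda>g. x g \<oplus>\<^bsub>B\<^esub> y g)"
  "\<zero>\<^bsub>skew B G act\<^esub> = (\<lambda>g. \<zero>\<^bsub>B\<^esub>)"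
  "\<one>\<^bsub>skew B G act\<^esub> = (\<lambda>g. if g = \<one>\<^bsub>G\<^esub> then \<one>\<^bsub>B\<^esub> else \<zero>\<^bsub>B\<^esub>)"
  "x \<otimes>\<^bsub>skew B G act\<^esub> y = (\<lambda>z. if z \<in> carrier G
                      then finsum B (\<lambda>g. x g \<otimes>\<^bsub>B\<^esub> act g (y (inv\<^bsub>G\<^esub> g \<otimes>\<^bsub>G\<^esub> z)))
                                    {g \<in> carrier G. x g \<noteq> \<zero>\<^bsub>B\<^esub>}
                      else \<zero>\<^bsub>B\<^esub>)"
  "sm (skew B G act) c x = (\<lambda>g. sm B c (x g))"
  "grd (skew B G act) n = {f. (\<forall>g. f g \<in> grd B n) \<and> (\<forall>g. g \<notin> carrier G \<longrightarrow> f g = \<zero>\<^bsub>B\<^esub>)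
                      \<and> finite {g. f g \<noteq> \<zero>\<^bsub>B\<^esub>}}"
  by (simp_all add: skew_def)

lemma qver_simps:
  "carrier (qver A r) = {M. (\<forall>i j. (i < r \<and> j < r \<longrightarrow> M i j \<in> ver_shift A r (int j - int i))
                                  \<and> (\<not> (i < r \<and> j < r) \<longrightarrow> M i j = \<zero>\<^bsub>A\<^esub>))}"
  "M \<otimes>\<^bsub>qver A r\<^esub> N = (\<lambda>i j. if i < r \<and> j < r
                        then finsum A (\<lambda>k. M k j \<otimes>\<^bsub>A\<^esub> N i k) {..<r} else \<zero>\<^bsub>A\<^esub>)"
  "\<one>\<^bsub>qver A r\<^esub> = (\<lambda>i j. if i = j \<and> i < r then \<one>\<^bsub>A\<^esub> else \<zero>\<^bsub>A\<^esub>)"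
  "\<zero>\<^bsub>qver A r\<^esub> = (\<lambda>i j. \<zero>\<^bsub>A\<^esub>)"
  "M \<oplus>\<^bsub>qver A r\<^esub> N = (\<lambda>i j. M i j \<oplus>\<^bsub>A\<^esub> N i j)"
  "sm (qver A r) c M = (\<lambda>i j. sm A c (M i j))"
  "grd (qver A r) n = {M. (\<forall>i j. (i < r \<and> j < r \<longrightarrow> M i j \<in> grdZ A (int r * int n + int j - int i))
                          \<and> (\<not> (i < r \<and> j < r) \<longrightarrow> M i j = \<zero>\<^bsub>A\<^esub>))}"
  by (simp_all add: qver_def)

lemma qver_entry:
  assumes ga: "graded_algebra A" and M: "M \<in> carrier (qver A r)"
  shows "M i j \<in> carrier A"
proof (cases "i < r \<and> j < r")
  case True
  then have "M i j \<in> ver_shift A r (int j - int i)" using M by (simp add: qver_simps)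
  then show ?thesis by (rule vs_carrier)
next
  case False
  then have "M i j = \<zero>\<^bsub>A\<^esub>" using M by (simp add: qver_simps)
  then show ?thesis using ring.ring_simprules(2)[OF ga_ring[OF ga]] by simp
qed

lemma am_skew:
  assumes B: "abelian_monoid B"
  shows "abelian_monoid (skew B G act)"
proof (rule abelian_monoidI)
  fix x y assume x: "x \<in> carrier (skew B G act)" and y: "y \<in> carrier (skew B G act)"
  have "{g. x g \<oplus>\<^bsub>B\<^esub> y g \<noteq> \<zero>\<^bsub>B\<^esub>} \<subseteq> {g. x g \<noteq> \<zero>\<^bsub>B\<^esub>} \<union> {g. y g \<noteq> \<zero>\<^bsub>B\<^esub>}"
    using abelian_monoid.l_zero[OF B abelian_monoid.zero_closed[OF B]] by auto
  moreover have "finite ({g. x g \<noteq> \<zero>\<^bsub>B\<^esub>} \<union> {g. y g \<noteq> \<zero>\<^bsub>B\<^esub>})" using x y by (simp add: skew_simps)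
  ultimately have "finite {g. x g \<oplus>\<^bsub>B\<^esub> y g \<noteq> \<zero>\<^bsub>B\<^esub>}" by (rule finite_subset)
  then show "x \<oplus>\<^bsub>skew B G act\<^esub> y \<in> carrier (skew B G act)"
    using x y abelian_monoid.a_closed[OF B] abelian_monoid.l_zero[OF B abelian_monoid.zero_closed[OF B]]
    by (simp add: skew_simps)
next
  show "\<zero>\<^bsub>skew B G act\<^esub> \<in> carrier (skew B G act)"
    using abelian_monoid.zero_closed[OF B] by (simp add: skew_simps)
next
  fix x y z assume x: "x \<in> carrier (skew B G act)" and y: "y \<in> carrier (skew B G act)"
    and z: "z \<in> carrier (skew B G act)"
  show "x \<oplus>\<^bsub>skew B G act\<^esub> y \<oplus>\<^bsub>skew B G act\<^esub> z = x \<oplus>\<^bsub>skew B G act\<^esub> (y \<oplus>\<^bsub>skew B G act\<^esub> z)"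
    using x y z abelian_monoid.a_assoc[OF B] by (simp add: skew_simps)
next
  fix x assume x: "x \<in> carrier (skew B G act)"
  show "\<zero>\<^bsub>skew B G act\<^esub> \<oplus>\<^bsub>skew B G act\<^esub> x = x"
    using x abelian_monoid.l_zero[OF B] by (simp add: skew_simps)
next
  fix x y assume x: "x \<in> carrier (skew B G act)" and y: "y \<in> carrier (skew B G act)"
  show "x \<oplus>\<^bsub>skew B G act\<^esub> y = y \<oplus>\<^bsub>skew B G act\<^esub> x"
    using x y abelian_monoid.a_comm[OF B] by (simp add: skew_simps)
qed

lemma am_qver:
  assumes ga: "graded_algebra A"
  shows "abelian_monoid (qver A r)"
proof -
  interpret R: ring A by (rule ga_ring[OF ga])
  have vc: "\<And>x d. x \<in> ver_shift A r d \<Longrightarrow> x \<in> carrier A" by (rule vs_carrier)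
  show ?thesis
  proof (rule abelian_monoidI)
    fix x y assume x: "x \<in> carrier (qver A r)" and y: "y \<in> carrier (qver A r)"
    show "x \<oplus>\<^bsub>qver A r\<^esub> y \<in> carrier (qver A r)"
      using x y vs_add[OF ga] by (simp add: qver_simps)
  next
    show "\<zero>\<^bsub>qver A r\<^esub> \<in> carrier (qver A r)"
      using vs_zero[OF ga] by (simp add: qver_simps)
  next
    fix x y z assume x: "x \<in> carrier (qver A r)" and y: "y \<in> carrier (qver A r)"
      and z: "z \<in> carrier (qver A r)"
    show "x \<oplus>\<^bsub>qver A r\<^esub> y \<oplus>\<^bsub>qver A r\<^esub> z = x \<oplus>\<^bsub>qver A r\<^esub> (y \<oplus>\<^bsub>qver A r\<^esub> z)"
    proof (simp add: qver_simps, intro ext)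
      fix i j show "x i j \<oplus>\<^bsub>A\<^esub> y i j \<oplus>\<^bsub>A\<^esub> z i j = x i j \<oplus>\<^bsub>A\<^esub> (y i j \<oplus>\<^bsub>A\<^esub> z i j)"
        using qver_entry[OF ga x] qver_entry[OF ga y] qver_entry[OF ga z] by (simp add: R.a_assoc)
    qed
  next
    fix x assume x: "x \<in> carrier (qver A r)"
    show "\<zero>\<^bsub>qver A r\<^esub> \<oplus>\<^bsub>qver A r\<^esub> x = x"
    proof (simp add: qver_simps, intro ext)
      fix i j show "\<zero>\<^bsub>A\<^esub> \<oplus>\<^bsub>A\<^esub> x i j = x i j"
        using qver_entry[OF ga x] by simp
    qed
  next
    fix x y assume x: "x \<in> carrier (qver A r)" and y: "y \<in> carrier (qver A r)"
    show "x \<oplus>\<^bsub>qver A r\<^esub> y = y \<oplus>\<^bsub>qver A r\<^esub> x"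
    proof (simp add: qver_simps, intro ext)
      fix i j show "x i j \<oplus>\<^bsub>A\<^esub> y i j = y i j \<oplus>\<^bsub>A\<^esub> x i j"
        using qver_entry[OF ga x] qver_entry[OF ga y] by (simp add: R.a_comm)
    qed
  qed
qed



lemma skew_eval:
  assumes B: "abelian_monoid B" and fin: "finite I" and F: "F \<in> I \<rightarrow> carrier (skew B G act)"
  shows "finsum (skew B G act) F I g = finsum B (\<lambda>i. F i g) I"
  by (rule finsum_hom[OF am_skew[OF B] B fin F, where e = "\<lambda>f. f g"]) (auto simp: skew_simps)

lemma hcomp_zero:
  assumes ga: "graded_algebra A"
  shows "hcomp A \<zero>\<^bsub>A\<^esub> = (\<lambda>_. \<zero>\<^bsub>A\<^esub>)"
proof -
  interpret R: ring A by (rule ga_ring[OF ga])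
  have "decomp A \<zero>\<^bsub>A\<^esub> (\<lambda>_. \<zero>\<^bsub>A\<^esub>)"
    by (rule decompI[OF ga_am[OF ga], of _ "{}"]) (auto simp: ga_grd_zero[OF ga] ga_grd_sub[OF ga])
  then show ?thesis by (rule hcomp_unique[OF ga_unique[OF ga R.zero_closed]])
qed

lemma skew_grd_sub:
  assumes ga: "graded_algebra A"
  shows "grd (skew A G act) n \<subseteq> carrier (skew A G act)"
  using ga_grd_sub[OF ga] by (auto simp: skew_simps)

lemma skew_decomp:
  assumes ga: "graded_algebra A" and x: "x \<in> carrier (skew A G act)"
  shows "decomp (skew A G act) x (\<lambda>n g. hcomp A (x g) n)"
    and "\<And>c. decomp (skew A G act) x c \<Longrightarrow> c = (\<lambda>n g. hcomp A (x g) n)"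
proof -
  interpret R: ring A by (rule ga_ring[OF ga])
  let ?S = "skew A G act"
  define c0 where "c0 = (\<lambda>n g. hcomp A (x g) n)"
  have am: "abelian_monoid ?S" by (rule am_skew[OF ga_am[OF ga]])
  have xg: "\<And>g. x g \<in> carrier A" using x by (simp add: skew_simps)
  have xo: "\<And>g. g \<notin> carrier G \<Longrightarrow> x g = \<zero>\<^bsub>A\<^esub>" using x by (simp add: skew_simps)
  have xf: "finite {g. x g \<noteq> \<zero>\<^bsub>A\<^esub>}" using x by (simp add: skew_simps)
  have hA: "\<And>g. decomp A (x g) (hcomp A (x g))" by (rule hcomp_decomp[OF ga_unique[OF ga xg]])
  have hz: "hcomp A \<zero>\<^bsub>A\<^esub> = (\<lambda>_. \<zero>\<^bsub>A\<^esub>)" by (rule hcomp_zero[OF ga])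
  have c0g: "\<And>n. c0 n \<in> grd ?S n"
  proof -
    fix n
    have "{g. c0 n g \<noteq> \<zero>\<^bsub>A\<^esub>} \<subseteq> {g. x g \<noteq> \<zero>\<^bsub>A\<^esub>}" unfolding c0_def using hz by auto
    then have "finite {g. c0 n g \<noteq> \<zero>\<^bsub>A\<^esub>}" using xf by (rule finite_subset)
    moreover have "\<forall>g. c0 n g \<in> grd A n" unfolding c0_def using decomp_grd[OF hA] by blast
    moreover have "\<forall>g. g \<notin> carrier G \<longrightarrow> c0 n g = \<zero>\<^bsub>A\<^esub>" unfolding c0_def using xo hz by simp
    ultimately show "c0 n \<in> grd ?S n" by (simp add: skew_simps)
  qed
  define N where "N = {n. c0 n \<noteq> \<zero>\<^bsub>?S\<^esub>}"
  have Nsub: "N \<subseteq> (\<Union>g\<in>{g. x g \<noteq> \<zero>\<^bsub>A\<^esub>}. {n. hcomp A (x g) n \<noteq> \<zero>\<^bsub>A\<^esub>})"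
  proof
    fix n assume "n \<in> N"
    then obtain g where g: "hcomp A (x g) n \<noteq> \<zero>\<^bsub>A\<^esub>" unfolding N_def c0_def by (auto simp: skew_simps)
    then have "x g \<noteq> \<zero>\<^bsub>A\<^esub>" using hz by auto
    then show "n \<in> (\<Union>g\<in>{g. x g \<noteq> \<zero>\<^bsub>A\<^esub>}. {n. hcomp A (x g) n \<noteq> \<zero>\<^bsub>A\<^esub>})" using g by blast
  qed
  have Nf: "finite N"
    by (rule finite_subset[OF Nsub]) (use xf decomp_fin[OF hA] in blast)
  have xs: "x = finsum ?S c0 N"
  proof
    fix g
    have "finsum ?S c0 N g = finsum A (\<lambda>n. c0 n g) N"
      by (rule skew_eval[OF ga_am[OF ga] Nf]) (use c0g skew_grd_sub[OF ga] in blast)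
    also have "\<dots> = x g" unfolding c0_def
    proof (rule decomp_sup[OF ga_am[OF ga] hA Nf, symmetric])
      show "{n. hcomp A (x g) n \<noteq> \<zero>\<^bsub>A\<^esub>} \<subseteq> N" unfolding N_def c0_def by (auto simp: skew_simps fun_eq_iff)
    qed (rule ga_grd_sub[OF ga])
    finally show "x g = finsum ?S c0 N g" by simp
  qed
  show "decomp ?S x (\<lambda>n g. hcomp A (x g) n)"
    unfolding c0_def[symmetric]
    by (rule decompI[OF am c0g Nf _ skew_grd_sub[OF ga] xs]) (simp add: N_def)
  fix c assume c: "decomp ?S x c"
  define Nc where "Nc = {n. c n \<noteq> \<zero>\<^bsub>?S\<^esub>}"
  have Ncf: "finite Nc" using decomp_fin[OF c] unfolding Nc_def .
  have cg: "\<And>n g. c n g \<in> grd A n" using decomp_grd[OF c] by (simp add: skew_simps)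
  have cs: "x = finsum ?S c Nc" using decomp_eq[OF c] unfolding Nc_def .
  show "c = (\<lambda>n g. hcomp A (x g) n)"
  proof (intro ext)
    fix n g
    have "decomp A (x g) (\<lambda>n. c n g)"
    proof (rule decompI[OF ga_am[OF ga] cg Ncf _ ga_grd_sub[OF ga]])
      show "{n. c n g \<noteq> \<zero>\<^bsub>A\<^esub>} \<subseteq> Nc" unfolding Nc_def by (auto simp: skew_simps)
      have "finsum ?S c Nc g = finsum A (\<lambda>n. c n g) Nc"
        by (rule skew_eval[OF ga_am[OF ga] Ncf]) (use decomp_grd[OF c] skew_grd_sub[OF ga] in blast)
      then show "x g = finsum A (\<lambda>n. c n g) Nc" using cs by simp
    qed
    then have "hcomp A (x g) = (\<lambda>n. c n g)" by (rule hcomp_unique[OF ga_unique[OF ga xg]])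
    then show "c n g = hcomp A (x g) n" by (simp add: fun_eq_iff)
  qed
qed

lemma skew_unique:
  assumes ga: "graded_algebra A" and x: "x \<in> carrier (skew A G act)"
  shows "\<exists>!c. decomp (skew A G act) x c"
  using skew_decomp[OF ga x] by blast

lemma skew_hcomp:
  assumes ga: "graded_algebra A" and x: "x \<in> carrier (skew A G act)"
  shows "hcomp (skew A G act) x = (\<lambda>n g. hcomp A (x g) n)"
  by (rule hcomp_unique[OF skew_unique[OF ga x] skew_decomp(1)[OF ga x]])

lemma vs_skew:
  assumes ga: "graded_algebra A"
  shows "x \<in> ver_shift (skew A G act) r d \<longleftrightarrow>
         x \<in> carrier (skew A G act) \<and> (\<forall>g. x g \<in> ver_shift A r d)"
proof (cases "x \<in> carrier (skew A G act)")
  case False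
  then show ?thesis unfolding ver_shift_def by simp
next
  case True
  have xg: "\<And>g. x g \<in> carrier A" using True by (simp add: skew_simps)
  have "(\<forall>m. hcomp (skew A G act) x m \<noteq> \<zero>\<^bsub>skew A G act\<^esub> \<longrightarrow> int m mod int r = d mod int r)
      \<longleftrightarrow> (\<forall>g. \<forall>m. hcomp A (x g) m \<noteq> \<zero>\<^bsub>A\<^esub> \<longrightarrow> int m mod int r = d mod int r)"
    unfolding skew_hcomp[OF ga True] by (auto simp: skew_simps fun_eq_iff)
  then show ?thesis using True xg unfolding ver_shift_def by auto
qed



lemma skew_mult_closed:
  assumes A: "ring A" and G: "group G"
    and act: "\<And>g a. g \<in> carrier G \<Longrightarrow> a \<in> carrier A \<Longrightarrow> act g a \<in> carrier A"
    and act0: "\<And>g. g \<in> carrier G \<Longrightarrow> act g \<zero>\<^bsub>A\<^esub> = \<zero>\<^bsub>A\<^esub>"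
    and x: "x \<in> carrier (skew A G act)" and y: "y \<in> carrier (skew A G act)"
  shows "x \<otimes>\<^bsub>skew A G act\<^esub> y \<in> carrier (skew A G act)"
proof -
  interpret R: ring A by (rule A)
  interpret Gp: group G by (rule G)
  have xg: "\<And>g. x g \<in> carrier A" and yg: "\<And>g. y g \<in> carrier A" using x y by (simp_all add: skew_simps)
  have yo: "\<And>g. g \<notin> carrier G \<Longrightarrow> y g = \<zero>\<^bsub>A\<^esub>" using y by (simp add: skew_simps)
  define Sx where "Sx = {g \<in> carrier G. x g \<noteq> \<zero>\<^bsub>A\<^esub>}"
  define Sy where "Sy = {g. y g \<noteq> \<zero>\<^bsub>A\<^esub>}"
  have fSx: "finite Sx" using x unfolding Sx_def by (simp add: skew_simps)
  have fSy: "finite Sy" using y unfolding Sy_def by (simp add: skew_simps)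
  define P where "P = x \<otimes>\<^bsub>skew A G act\<^esub> y"
  have P: "\<And>z. P z = (if z \<in> carrier G then finsum A (\<lambda>g. x g \<otimes>\<^bsub>A\<^esub> act g (y (inv\<^bsub>G\<^esub> g \<otimes>\<^bsub>G\<^esub> z))) Sx
                   else \<zero>\<^bsub>A\<^esub>)"
    unfolding P_def Sx_def by (simp add: skew_simps)
  have tc: "\<And>g z. g \<in> Sx \<Longrightarrow> x g \<otimes>\<^bsub>A\<^esub> act g (y (inv\<^bsub>G\<^esub> g \<otimes>\<^bsub>G\<^esub> z)) \<in> carrier A"
    using xg yg act unfolding Sx_def by simp
  have Pc: "\<And>z. P z \<in> carrier A"
    using P tc by (simp add: R.finsum_closed Pi_def)
  have Psub: "{z. P z \<noteq> \<zero>\<^bsub>A\<^esub>} \<subseteq> (\<Union>g\<in>Sx. {z \<in> carrier G. inv\<^bsub>G\<^esub> g \<otimes>\<^bsub>G\<^esub> z \<in> Sy})"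
  proof
    fix z assume "z \<in> {z. P z \<noteq> \<zero>\<^bsub>A\<^esub>}"
    then have nz: "P z \<noteq> \<zero>\<^bsub>A\<^esub>" by simp
    then have zG: "z \<in> carrier G" using P by (cases "z \<in> carrier G") auto
    have "\<exists>g\<in>Sx. x g \<otimes>\<^bsub>A\<^esub> act g (y (inv\<^bsub>G\<^esub> g \<otimes>\<^bsub>G\<^esub> z)) \<noteq> \<zero>\<^bsub>A\<^esub>"
    proof (rule ccontr)
      assume "\<not> ?thesis"
      then have "finsum A (\<lambda>g. x g \<otimes>\<^bsub>A\<^esub> act g (y (inv\<^bsub>G\<^esub> g \<otimes>\<^bsub>G\<^esub> z))) Sx = finsum A (\<lambda>g. \<zero>\<^bsub>A\<^esub>) Sx"
        by (intro R.finsum_cong') auto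
      then show False using nz P zG by simp
    qed
    then obtain g where g: "g \<in> Sx" and t: "x g \<otimes>\<^bsub>A\<^esub> act g (y (inv\<^bsub>G\<^esub> g \<otimes>\<^bsub>G\<^esub> z)) \<noteq> \<zero>\<^bsub>A\<^esub>" by blast
    have gG: "g \<in> carrier G" using g unfolding Sx_def by simp
    have "y (inv\<^bsub>G\<^esub> g \<otimes>\<^bsub>G\<^esub> z) \<noteq> \<zero>\<^bsub>A\<^esub>"
      using t act0[OF gG] xg by auto
    then show "z \<in> (\<Union>g\<in>Sx. {z \<in> carrier G. inv\<^bsub>G\<^esub> g \<otimes>\<^bsub>G\<^esub> z \<in> Sy})"
      using g zG unfolding Sy_def by blast
  qed
  have "finite (\<Union>g\<in>Sx. {z \<in> carrier G. inv\<^bsub>G\<^esub> g \<otimes>\<^bsub>G\<^esub> z \<in> Sy})"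
  proof (rule finite_UN_I[OF fSx])
    fix g assume g: "g \<in> Sx"
    have gG: "g \<in> carrier G" using g unfolding Sx_def by simp
    have ig: "inv\<^bsub>G\<^esub> g \<in> carrier G" using gG by simp
    show "finite {z \<in> carrier G. inv\<^bsub>G\<^esub> g \<otimes>\<^bsub>G\<^esub> z \<in> Sy}"
    proof (rule inj_on_finite[OF _ _ fSy])
      show "inj_on (\<lambda>z. inv\<^bsub>G\<^esub> g \<otimes>\<^bsub>G\<^esub> z) {z \<in> carrier G. inv\<^bsub>G\<^esub> g \<otimes>\<^bsub>G\<^esub> z \<in> Sy}"
        using ig by (auto simp: inj_on_def)
      show "(\<lambda>z. inv\<^bsub>G\<^esub> g \<otimes>\<^bsub>G\<^esub> z) ` {z \<in> carrier G. inv\<^bsub>G\<^esub> g \<otimes>\<^bsub>G\<^esub> z \<in> Sy} \<subseteq> Sy" by blast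
    qed
  qed
  then have "finite {z. P z \<noteq> \<zero>\<^bsub>A\<^esub>}" using Psub by (rule finite_subset[rotated])
  moreover have "\<And>z. z \<notin> carrier G \<Longrightarrow> P z = \<zero>\<^bsub>A\<^esub>" using P by simp
  ultimately show ?thesis using Pc unfolding P_def by (simp add: skew_simps)
qed

lemma qver_mult_closed:
  assumes ga: "graded_algebra A" and M: "M \<in> carrier (qver A r)" and N: "N \<in> carrier (qver A r)"
  shows "M \<otimes>\<^bsub>qver A r\<^esub> N \<in> carrier (qver A r)"
proof -
  have "\<And>i j. i < r \<Longrightarrow> j < r \<Longrightarrow> finsum A (\<lambda>k. M k j \<otimes>\<^bsub>A\<^esub> N i k) {..<r} \<in> ver_shift A r (int j - int i)"
  proof -
    fix i j assume i: "i < r" and j: "j < r"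
    show "finsum A (\<lambda>k. M k j \<otimes>\<^bsub>A\<^esub> N i k) {..<r} \<in> ver_shift A r (int j - int i)"
    proof (rule vs_finsum[OF ga], simp)
      fix k assume k: "k \<in> {..<r}"
      have "M k j \<in> ver_shift A r (int j - int k)" using M k j by (simp add: qver_simps)
      moreover have "N i k \<in> ver_shift A r (int k - int i)" using N k i by (simp add: qver_simps)
      ultimately have "M k j \<otimes>\<^bsub>A\<^esub> N i k \<in> ver_shift A r ((int j - int k) + (int k - int i))"
        by (rule vs_mult[OF ga])
      then show "M k j \<otimes>\<^bsub>A\<^esub> N i k \<in> ver_shift A r (int j - int i)" by simp
    qed
  qed
  then show ?thesis by (simp add: qver_simps)
qed

lemma qver_act_closed:
  assumes ga: "graded_algebra A" and g: "g \<in> carrier (GrAut A)" and M: "M \<in> carrier (qver A r)"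
  shows "(\<lambda>i j. g (M i j)) \<in> carrier (qver A r)"
  using M vs_aut[OF ga g] graut_props(3)[OF ga g] by (simp add: qver_simps)



theorem lemma2p29:
  fixes A :: "('k::field, 'a) gralg" and H :: "('a \<Rightarrow> 'a) set" and r :: nat
  assumes "alg_closed TYPE('k)"
    and "graded_algebra A"
    and "subgroup H (GrAut A)"
    and "r \<ge> 1"
  shows "\<exists>\<phi>. graded_iso
            (skew (qver A r) ((GrAut A)\<lparr>carrier := H\<rparr>) (\<lambda>g M i j. g (M i j)))
            (qver (skew A ((GrAut A)\<lparr>carrier := H\<rparr>) (\<lambda>g a. g a)) r)
            \<phi>"
proof -
  have ga: "graded_algebra A" by (rule assms(2))
  interpret R: ring A by (rule ga_ring[OF ga])
  let ?G = "(GrAut A)\<lparr>carrier := H\<rparr>"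
  let ?B = "qver A r"
  let ?L = "skew (qver A r) ((GrAut A)\<lparr>carrier := H\<rparr>) (\<lambda>g M i j. g (M i j))"
  let ?C = "skew A ((GrAut A)\<lparr>carrier := H\<rparr>) (\<lambda>g a. g a)"
  let ?R = "qver (skew A ((GrAut A)\<lparr>carrier := H\<rparr>) (\<lambda>g a. g a)) r"
  define phi :: "(('a \<Rightarrow> 'a) \<Rightarrow> nat \<Rightarrow> nat \<Rightarrow> 'a) \<Rightarrow> nat \<Rightarrow> nat \<Rightarrow> ('a \<Rightarrow> 'a) \<Rightarrow> 'a"
    where "phi = (\<lambda>f i j g. f g i j)"
  define psi :: "(nat \<Rightarrow> nat \<Rightarrow> ('a \<Rightarrow> 'a) \<Rightarrow> 'a) \<Rightarrow> ('a \<Rightarrow> 'a) \<Rightarrow> nat \<Rightarrow> nat \<Rightarrow> 'a"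
    where "psi = (\<lambda>M g i j. M i j g)"
  have grp: "group ?G" by (rule subgroup.subgroup_is_group[OF assms(3) graut_group[OF ga]])
  have cG: "carrier ?G = H" by simp
  have Hs: "\<And>g. g \<in> H \<Longrightarrow> g \<in> carrier (GrAut A)" using subgroup.subset[OF assms(3)] by blast
  have amA: "abelian_monoid A" by (rule ga_am[OF ga])
  have amB: "abelian_monoid ?B" by (rule am_qver[OF ga])
  have amC: "abelian_monoid ?C" by (rule am_skew[OF amA])
  have cL: "\<And>f. f \<in> carrier ?L \<longleftrightarrow> (\<forall>g. f g \<in> carrier ?B) \<and> (\<forall>g. g \<notin> H \<longrightarrow> f g = (\<lambda>i j. \<zero>\<^bsub>A\<^esub>))
      \<and> finite {g. f g \<noteq> (\<lambda>i j. \<zero>\<^bsub>A\<^esub>)}"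
    by (simp add: skew_simps qver_simps(4))
  have cC: "\<And>x. x \<in> carrier ?C \<longleftrightarrow> (\<forall>g. x g \<in> carrier A) \<and> (\<forall>g. g \<notin> H \<longrightarrow> x g = \<zero>\<^bsub>A\<^esub>)
      \<and> finite {g. x g \<noteq> \<zero>\<^bsub>A\<^esub>}"
    by (simp add: skew_simps)
  have cR: "\<And>M. M \<in> carrier ?R \<longleftrightarrow> (\<forall>i j. (i < r \<and> j < r \<longrightarrow> M i j \<in> carrier ?C
          \<and> (\<forall>g. M i j g \<in> ver_shift A r (int j - int i)))
        \<and> (\<not> (i < r \<and> j < r) \<longrightarrow> M i j = (\<lambda>g. \<zero>\<^bsub>A\<^esub>)))"
    by (simp only: qver_simps(1) mem_Collect_eq vs_skew[OF ga] skew_simps(3))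
  have cB: "\<And>M. M \<in> carrier ?B \<longleftrightarrow> (\<forall>i j. (i < r \<and> j < r \<longrightarrow> M i j \<in> ver_shift A r (int j - int i))
                                  \<and> (\<not> (i < r \<and> j < r) \<longrightarrow> M i j = \<zero>\<^bsub>A\<^esub>))"
    by (simp add: qver_simps)
  have zC: "(\<lambda>g. \<zero>\<^bsub>A\<^esub>) \<in> carrier ?C" using cC by simp
  have phiC: "\<And>f. f \<in> carrier ?L \<Longrightarrow> phi f \<in> carrier ?R"
  proof -
    fix f assume f: "f \<in> carrier ?L"
    have fB: "\<And>g. f g \<in> carrier ?B" and fo: "\<And>g. g \<notin> H \<Longrightarrow> f g = (\<lambda>i j. \<zero>\<^bsub>A\<^esub>)"
      and ff: "finite {g. f g \<noteq> (\<lambda>i j. \<zero>\<^bsub>A\<^esub>)}" using f cL by auto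
    show "phi f \<in> carrier ?R" unfolding cR
    proof (intro allI conjI impI)
      fix i j assume ij: "i < r \<and> j < r"
      have "{g. f g i j \<noteq> \<zero>\<^bsub>A\<^esub>} \<subseteq> {g. f g \<noteq> (\<lambda>i j. \<zero>\<^bsub>A\<^esub>)}" by auto
      then have "finite {g. f g i j \<noteq> \<zero>\<^bsub>A\<^esub>}" using ff by (rule finite_subset)
      then show "phi f i j \<in> carrier ?C" unfolding cC phi_def
        using qver_entry[OF ga fB] fo by simp
      fix g show "phi f i j g \<in> ver_shift A r (int j - int i)"
        unfolding phi_def using fB ij cB by blast
    next
      fix i j assume ij: "\<not> (i < r \<and> j < r)"
      show "phi f i j = (\<lambda>g. \<zero>\<^bsub>A\<^esub>)" unfolding phi_def using fB ij cB by auto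
    qed
  qed
  have RC: "\<And>M i j. M \<in> carrier ?R \<Longrightarrow> M i j \<in> carrier ?C"
  proof -
    fix M i j assume M: "M \<in> carrier ?R"
    show "M i j \<in> carrier ?C" using M zC unfolding cR by (cases "i < r \<and> j < r") auto
  qed
  have psiC: "\<And>M. M \<in> carrier ?R \<Longrightarrow> psi M \<in> carrier ?L"
  proof -
    fix M assume M: "M \<in> carrier ?R"
    have Mc: "\<And>i j g. M i j g \<in> carrier A" and Mo: "\<And>i j g. g \<notin> H \<Longrightarrow> M i j g = \<zero>\<^bsub>A\<^esub>"
      and Mf: "\<And>i j. finite {g. M i j g \<noteq> \<zero>\<^bsub>A\<^esub>}" using RC[OF M] cC by auto
    have "\<And>g. psi M g \<in> carrier ?B" unfolding cB psi_def using M cR by auto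
    moreover have "\<And>g. g \<notin> H \<Longrightarrow> psi M g = (\<lambda>i j. \<zero>\<^bsub>A\<^esub>)" unfolding psi_def using Mo by auto
    moreover have "finite {g. psi M g \<noteq> (\<lambda>i j. \<zero>\<^bsub>A\<^esub>)}"
    proof (rule finite_subset)
      show "{g. psi M g \<noteq> (\<lambda>i j. \<zero>\<^bsub>A\<^esub>)} \<subseteq> (\<Union>i<r. \<Union>j<r. {g. M i j g \<noteq> \<zero>\<^bsub>A\<^esub>})"
      proof
        fix g assume "g \<in> {g. psi M g \<noteq> (\<lambda>i j. \<zero>\<^bsub>A\<^esub>)}"
        then obtain i j where n: "M i j g \<noteq> \<zero>\<^bsub>A\<^esub>" unfolding psi_def by (auto simp: fun_eq_iff)
        then have "i < r \<and> j < r" using M cR by (cases "i < r \<and> j < r") auto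
        then show "g \<in> (\<Union>i<r. \<Union>j<r. {g. M i j g \<noteq> \<zero>\<^bsub>A\<^esub>})" using n by blast
      qed
      show "finite (\<Union>i<r. \<Union>j<r. {g. M i j g \<noteq> \<zero>\<^bsub>A\<^esub>})" using Mf by blast
    qed
    ultimately show "psi M \<in> carrier ?L" unfolding cL by blast
  qed
  have pp: "\<And>M. phi (psi M) = M" unfolding phi_def psi_def by simp
  have qq: "\<And>f. psi (phi f) = f" unfolding phi_def psi_def by simp
  have bij: "bij_betw phi (carrier ?L) (carrier ?R)"
    by (rule bij_betw_byWitness[where f'=psi]) (use pp qq phiC psiC in auto)
  have gL: "\<And>f n. f \<in> grd ?L n \<longleftrightarrow> (\<forall>g. f g \<in> grd ?B n) \<and> (\<forall>g. g \<notin> H \<longrightarrow> f g = (\<lambda>i j. \<zero>\<^bsub>A\<^esub>))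
      \<and> finite {g. f g \<noteq> (\<lambda>i j. \<zero>\<^bsub>A\<^esub>)}"
    by (simp add: skew_simps qver_simps(4))
  have gB: "\<And>M n. M \<in> grd ?B n \<longleftrightarrow> (\<forall>i j. (i < r \<and> j < r \<longrightarrow> M i j \<in> grdZ A (int r * int n + int j - int i))
                          \<and> (\<not> (i < r \<and> j < r) \<longrightarrow> M i j = \<zero>\<^bsub>A\<^esub>))"
    by (simp add: qver_simps)
  have gR: "\<And>M n. M \<in> grd ?R n \<longleftrightarrow> (\<forall>i j. (i < r \<and> j < r \<longrightarrow> M i j \<in> grdZ ?C (int r * int n + int j - int i))
                          \<and> (\<not> (i < r \<and> j < r) \<longrightarrow> M i j = (\<lambda>g. \<zero>\<^bsub>A\<^esub>)))"
    by (simp add: qver_simps skew_simps(3))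
  have gZC: "\<And>x m. x \<in> grdZ ?C m \<longleftrightarrow> (if m < 0 then x = (\<lambda>g. \<zero>\<^bsub>A\<^esub>) else
        (\<forall>g. x g \<in> grd A (nat m)) \<and> (\<forall>g. g \<notin> H \<longrightarrow> x g = \<zero>\<^bsub>A\<^esub>) \<and> finite {g. x g \<noteq> \<zero>\<^bsub>A\<^esub>})"
    by (simp add: grdZ_def skew_simps)
  have gZA: "\<And>x m. x \<in> grdZ A m \<longleftrightarrow> (if m < 0 then x = \<zero>\<^bsub>A\<^esub> else x \<in> grd A (nat m))"
    by (simp add: grdZ_def)
  have phiG: "\<And>f n. f \<in> grd ?L n \<Longrightarrow> phi f \<in> grd ?R n"
  proof -
    fix f n assume f: "f \<in> grd ?L n"
    have fB: "\<And>g. f g \<in> grd ?B n" and fo: "\<And>g. g \<notin> H \<Longrightarrow> f g = (\<lambda>i j. \<zero>\<^bsub>A\<^esub>)"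
      and ff: "finite {g. f g \<noteq> (\<lambda>i j. \<zero>\<^bsub>A\<^esub>)}" using f gL by auto
    show "phi f \<in> grd ?R n" unfolding gR
    proof (intro allI conjI impI)
      fix i j assume ij: "i < r \<and> j < r"
      define m where "m = int r * int n + int j - int i"
      have fg: "\<And>g. f g i j \<in> grdZ A m" using fB ij gB unfolding m_def by blast
      have "{g. f g i j \<noteq> \<zero>\<^bsub>A\<^esub>} \<subseteq> {g. f g \<noteq> (\<lambda>i j. \<zero>\<^bsub>A\<^esub>)}" by auto
      then have fin: "finite {g. f g i j \<noteq> \<zero>\<^bsub>A\<^esub>}" using ff by (rule finite_subset)
      show "phi f i j \<in> grdZ ?C (int r * int n + int j - int i)"
        unfolding m_def[symmetric] gZC
      proof (cases "m < 0")
        case True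
        then show "if m < 0 then phi f i j = (\<lambda>g. \<zero>\<^bsub>A\<^esub>) else
          (\<forall>g. phi f i j g \<in> grd A (nat m)) \<and> (\<forall>g. g \<notin> H \<longrightarrow> phi f i j g = \<zero>\<^bsub>A\<^esub>) \<and> finite {g. phi f i j g \<noteq> \<zero>\<^bsub>A\<^esub>}"
          using fg gZA unfolding phi_def by (simp add: fun_eq_iff)
      next
        case False
        then show "if m < 0 then phi f i j = (\<lambda>g. \<zero>\<^bsub>A\<^esub>) else
          (\<forall>g. phi f i j g \<in> grd A (nat m)) \<and> (\<forall>g. g \<notin> H \<longrightarrow> phi f i j g = \<zero>\<^bsub>A\<^esub>) \<and> finite {g. phi f i j g \<noteq> \<zero>\<^bsub>A\<^esub>}"
          using fg gZA fo fin unfolding phi_def by simp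
      qed
    next
      fix i j assume ij: "\<not> (i < r \<and> j < r)"
      show "phi f i j = (\<lambda>g. \<zero>\<^bsub>A\<^esub>)" unfolding phi_def using fB ij gB by auto
    qed
  qed
  have psiG: "\<And>M n. M \<in> grd ?R n \<Longrightarrow> psi M \<in> grd ?L n"
  proof -
    fix M n assume M: "M \<in> grd ?R n"
    have Mp: "\<And>i j. (\<forall>g. g \<notin> H \<longrightarrow> M i j g = \<zero>\<^bsub>A\<^esub>) \<and> finite {g. M i j g \<noteq> \<zero>\<^bsub>A\<^esub>}
       \<and> (i < r \<and> j < r \<longrightarrow> (\<forall>g. M i j g \<in> grdZ A (int r * int n + int j - int i)))
       \<and> (\<not> (i < r \<and> j < r) \<longrightarrow> (\<forall>g. M i j g = \<zero>\<^bsub>A\<^esub>))"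
    proof -
      fix i j
      show "?thesis i j"
      proof (cases "i < r \<and> j < r")
        case ij: True
        define m where "m = int r * int n + int j - int i"
        have Mij: "M i j \<in> grdZ ?C m" using M ij gR unfolding m_def by blast
        show ?thesis
        proof (cases "m < 0")
          case True
          then have "M i j = (\<lambda>g. \<zero>\<^bsub>A\<^esub>)" using Mij gZC by simp
          then show ?thesis using \<open>m < 0\<close> gZA ij unfolding m_def[symmetric] by simp
        next
          case False
          then show ?thesis using Mij gZC gZA ij unfolding m_def[symmetric] by simp
        qed
      next
        case False
        then have "M i j = (\<lambda>g. \<zero>\<^bsub>A\<^esub>)" using M gR by blast
        then show ?thesis using False by auto
      qed
    qed
    have "\<And>g. psi M g \<in> grd ?B n" unfolding gB psi_def using Mp by auto
    moreover have "\<And>g. g \<notin> H \<Longrightarrow> psi M g = (\<lambda>i j. \<zero>\<^bsub>A\<^esub>)" unfolding psi_def using Mp by auto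
    moreover have "finite {g. psi M g \<noteq> (\<lambda>i j. \<zero>\<^bsub>A\<^esub>)}"
    proof (rule finite_subset)
      show "{g. psi M g \<noteq> (\<lambda>i j. \<zero>\<^bsub>A\<^esub>)} \<subseteq> (\<Union>i<r. \<Union>j<r. {g. M i j g \<noteq> \<zero>\<^bsub>A\<^esub>})"
      proof
        fix g assume "g \<in> {g. psi M g \<noteq> (\<lambda>i j. \<zero>\<^bsub>A\<^esub>)}"
        then obtain i j where n: "M i j g \<noteq> \<zero>\<^bsub>A\<^esub>" unfolding psi_def by (auto simp: fun_eq_iff)
        then have "i < r \<and> j < r" using Mp by blast
        then show "g \<in> (\<Union>i<r. \<Union>j<r. {g. M i j g \<noteq> \<zero>\<^bsub>A\<^esub>})" using n by blast
      qed
      show "finite (\<Union>i<r. \<Union>j<r. {g. M i j g \<noteq> \<zero>\<^bsub>A\<^esub>})" using Mp by blast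
    qed
    ultimately show "psi M \<in> grd ?L n" unfolding gL by blast
  qed
  have gim: "\<And>n. phi ` grd ?L n = grd ?R n"
  proof
    fix n show "phi ` grd ?L n \<subseteq> grd ?R n" using phiG by blast
    show "grd ?R n \<subseteq> phi ` grd ?L n"
    proof
      fix M assume "M \<in> grd ?R n"
      then show "M \<in> phi ` grd ?L n" using psiG pp by (metis image_eqI)
    qed
  qed
  have hadd: "\<And>f h. phi (f \<oplus>\<^bsub>?L\<^esub> h) = phi f \<oplus>\<^bsub>?R\<^esub> phi h"
    unfolding phi_def by (simp add: skew_simps qver_simps)
  have hsm: "\<And>c f. phi (sm ?L c f) = sm ?R c (phi f)"
    unfolding phi_def by (simp add: skew_simps qver_simps)
  have hone: "phi \<one>\<^bsub>?L\<^esub> = \<one>\<^bsub>?R\<^esub>"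
    unfolding phi_def by (simp add: skew_simps qver_simps fun_eq_iff)
  have hmult: "\<And>f h. f \<in> carrier ?L \<Longrightarrow> h \<in> carrier ?L \<Longrightarrow> phi (f \<otimes>\<^bsub>?L\<^esub> h) = phi f \<otimes>\<^bsub>?R\<^esub> phi h"
  proof -
    fix f h assume f: "f \<in> carrier ?L" and h: "h \<in> carrier ?L"
    have fB: "\<And>g. f g \<in> carrier ?B" and ff: "finite {g. f g \<noteq> (\<lambda>i j. \<zero>\<^bsub>A\<^esub>)}"
      using f cL by auto
    have hB: "\<And>g. h g \<in> carrier ?B" using h cL by auto
    show "phi (f \<otimes>\<^bsub>?L\<^esub> h) = phi f \<otimes>\<^bsub>?R\<^esub> phi h"
    proof (intro ext)
      fix i j x
      define S where "S = {g \<in> H. f g \<noteq> (\<lambda>i j. \<zero>\<^bsub>A\<^esub>)}"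
      define F where "F = (\<lambda>g. f g \<otimes>\<^bsub>?B\<^esub> (\<lambda>i j. g (h (inv\<^bsub>?G\<^esub> g \<otimes>\<^bsub>?G\<^esub> x) i j)))"
      define T where "T = (\<lambda>g k. f g k j \<otimes>\<^bsub>A\<^esub> g (h (inv\<^bsub>?G\<^esub> g \<otimes>\<^bsub>?G\<^esub> x) i k))"
      have fS: "finite S" using ff unfolding S_def by (rule finite_subset[rotated]) auto
      have SH: "\<And>g. g \<in> S \<Longrightarrow> g \<in> carrier (GrAut A)" unfolding S_def using Hs by blast
      have FB: "F \<in> S \<rightarrow> carrier ?B"
        unfolding F_def using qver_mult_closed[OF ga fB qver_act_closed[OF ga SH hB]] by blast
      have LHS: "phi (f \<otimes>\<^bsub>?L\<^esub> h) i j x = (if x \<in> H then finsum ?B F S else \<zero>\<^bsub>?B\<^esub>) i j"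
        unfolding phi_def F_def S_def by (simp add: skew_simps qver_simps(4))
      have RHS: "(phi f \<otimes>\<^bsub>?R\<^esub> phi h) i j x = (if i < r \<and> j < r
          then finsum ?C (\<lambda>k. phi f k j \<otimes>\<^bsub>?C\<^esub> phi h i k) {..<r} else \<zero>\<^bsub>?C\<^esub>) x"
        by (simp add: qver_simps)
      have Lev: "finsum ?B F S i j = finsum A (\<lambda>g. F g i j) S"
        by (rule finsum_hom[OF amB amA fS FB, where e = "\<lambda>M. M i j"])
           (auto simp: qver_simps intro: qver_entry[OF ga])
      have Fe: "\<And>g. F g i j = (if i < r \<and> j < r then finsum A (\<lambda>k. T g k) {..<r} else \<zero>\<^bsub>A\<^esub>)"
        unfolding F_def T_def by (simp add: qver_simps)
      have phiCC: "\<And>f' k l. f' \<in> carrier ?L \<Longrightarrow> phi f' k l \<in> carrier ?C"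
        using RC phiC by blast
      have act: "\<And>g a. g \<in> carrier ?G \<Longrightarrow> a \<in> carrier A \<Longrightarrow> g a \<in> carrier A"
        using graut_props(1)[OF ga] Hs by simp
      have act0: "\<And>g. g \<in> carrier ?G \<Longrightarrow> g \<zero>\<^bsub>A\<^esub> = \<zero>\<^bsub>A\<^esub>"
        using graut_props(3)[OF ga] Hs by simp
      have PC: "\<And>k. phi f k j \<otimes>\<^bsub>?C\<^esub> phi h i k \<in> carrier ?C"
      proof -
        fix k
        show "phi f k j \<otimes>\<^bsub>?C\<^esub> phi h i k \<in> carrier ?C"
        proof (rule skew_mult_closed[where act = "\<lambda>g a. g a"])
          show "ring A" by (rule ga_ring[OF ga])
          show "group ?G" by (rule grp)
          show "\<And>g a. g \<in> carrier ?G \<Longrightarrow> a \<in> carrier A \<Longrightarrow> g a \<in> carrier A" by (rule act)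
          show "\<And>g. g \<in> carrier ?G \<Longrightarrow> g \<zero>\<^bsub>A\<^esub> = \<zero>\<^bsub>A\<^esub>" by (rule act0)
          show "phi f k j \<in> carrier ?C" by (rule phiCC[OF f])
          show "phi h i k \<in> carrier ?C" by (rule phiCC[OF h])
        qed
      qed
      have Rev: "finsum ?C (\<lambda>k. phi f k j \<otimes>\<^bsub>?C\<^esub> phi h i k) {..<r} x
          = finsum A (\<lambda>k. (phi f k j \<otimes>\<^bsub>?C\<^esub> phi h i k) x) {..<r}"
        by (rule skew_eval[OF amA]) (use PC in auto)
      have Tc: "\<And>g k. g \<in> S \<Longrightarrow> T g k \<in> carrier A"
        unfolding T_def using qver_entry[OF ga fB] qver_entry[OF ga hB] graut_props(1)[OF ga SH] by simp
      have Pk: "\<And>k. x \<in> H \<Longrightarrow> (phi f k j \<otimes>\<^bsub>?C\<^esub> phi h i k) x = finsum A (\<lambda>g. T g k) S"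
      proof -
        fix k assume xH: "x \<in> H"
        have "(phi f k j \<otimes>\<^bsub>?C\<^esub> phi h i k) x = finsum A (\<lambda>g. T g k) {g \<in> H. f g k j \<noteq> \<zero>\<^bsub>A\<^esub>}"
          using xH unfolding phi_def T_def by (simp add: skew_simps)
        also have "\<dots> = finsum A (\<lambda>g. T g k) S"
        proof (rule abelian_monoid.finsum_mnc_left[OF amA fS])
          show "{g \<in> H. f g k j \<noteq> \<zero>\<^bsub>A\<^esub>} \<subseteq> S" unfolding S_def by auto
          show "\<And>g. g \<in> S - {g \<in> H. f g k j \<noteq> \<zero>\<^bsub>A\<^esub>} \<Longrightarrow> T g k = \<zero>\<^bsub>A\<^esub>"
          proof -
            fix g assume g: "g \<in> S - {g \<in> H. f g k j \<noteq> \<zero>\<^bsub>A\<^esub>}"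
            then have "f g k j = \<zero>\<^bsub>A\<^esub>" unfolding S_def by auto
            moreover have "g (h (inv\<^bsub>?G\<^esub> g \<otimes>\<^bsub>?G\<^esub> x) i k) \<in> carrier A"
              using qver_entry[OF ga hB] graut_props(1)[OF ga SH] g by blast
            ultimately show "T g k = \<zero>\<^bsub>A\<^esub>" unfolding T_def by simp
          qed
          show "(\<lambda>g. T g k) \<in> S \<rightarrow> carrier A" using Tc by blast
        qed simp
        finally show "(phi f k j \<otimes>\<^bsub>?C\<^esub> phi h i k) x = finsum A (\<lambda>g. T g k) S" .
      qed
      have Pk0: "\<And>k. x \<notin> H \<Longrightarrow> (phi f k j \<otimes>\<^bsub>?C\<^esub> phi h i k) x = \<zero>\<^bsub>A\<^esub>"
        by (simp add: skew_simps)
      show "phi (f \<otimes>\<^bsub>?L\<^esub> h) i j x = (phi f \<otimes>\<^bsub>?R\<^esub> phi h) i j x"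
      proof (cases "i < r \<and> j < r")
        case ij: True
        show ?thesis
        proof (cases "x \<in> H")
          case xH: True
          have "phi (f \<otimes>\<^bsub>?L\<^esub> h) i j x = finsum A (\<lambda>g. finsum A (\<lambda>k. T g k) {..<r}) S"
            using LHS Lev Fe ij xH by simp
          also have "\<dots> = finsum A (\<lambda>k. finsum A (\<lambda>g. T g k) S) {..<r}"
            by (rule finsum_swap[OF amA fS]) (use Tc in auto)
          also have "\<dots> = (phi f \<otimes>\<^bsub>?R\<^esub> phi h) i j x"
            using RHS Rev Pk xH ij by simp
          finally show ?thesis .
        next
          case xH: False
          have "(phi f \<otimes>\<^bsub>?R\<^esub> phi h) i j x = finsum A (\<lambda>k. \<zero>\<^bsub>A\<^esub>) {..<r}"
            using RHS Rev Pk0 xH ij by simp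
          then show ?thesis using LHS xH by (simp add: qver_simps)
        qed
      next
        case False
        have "phi (f \<otimes>\<^bsub>?L\<^esub> h) i j x = \<zero>\<^bsub>A\<^esub>"
        proof (cases "x \<in> H")
          case True
          then have "phi (f \<otimes>\<^bsub>?L\<^esub> h) i j x = finsum A (\<lambda>g. \<zero>\<^bsub>A\<^esub>) S"
            using LHS Lev Fe False by simp
          then show ?thesis by simp
        next
          case False
          then show ?thesis using LHS by (simp add: qver_simps)
        qed
        then show ?thesis using RHS False by (simp add: skew_simps)
      qed
    qed
  qed
  show ?thesis
  proof (intro exI[of _ phi])
    show "graded_iso ?L ?R phi"
      unfolding graded_iso_def graded_hom_def
      using phiC hadd hmult hone hsm gim bij by auto
  qed
qed

end
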